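(* Let $\Sigma$ be a Riemann surface with a holomorphic cubic differential $\phi$ having a pole of order $n+3\ge4$ at a puncture $p$, and identify a punctured closed neighborhood of $p$ with the glued surface $M$ built from the closed half-planes $\overline H_1,\dots,\overline H_n$ (each $\overline H_i\cong\{w:\mathrm{Re}\,w\ge0\}$ with $\phi=dw^3$) as described in the context. Let $g$ be a conformal metric on $\Sigma$ satisfying $\kappa_g=-1+\|\phi\|_g^2$ with $\kappa_g\le0$. Then there are constants $C,r_0>0$ such that for every $i\in\{1,\dots,n\}$, writing $g=e^{u}|dw|^2$ on $\overline H_i$, one has $0\le u(w)\le C|w|^{1/2}e^{-\sqrt6|w|}$ for all $w\in\overline H_i$ with $|w|\ge r_0$.
   Context: For $g=e^u|dw|^2$, $\phi=\phi(w)dw^3$: $\|\phi\|_g^2=e^{-3u}|\phi|^2$, $\kappa_g=-\frac12e^{-u}\Delta u$. The surface $M$: there are $a_i>0$, $b_i\in\mathbb R$; in $\overline H_i$ let $T_i=\{ib_i+\rho e^{i\theta}:\rho\ge0,\pi/6\le\theta\le\pi/2\}$ and $B_i=\{i(b_i-a_i)+\rho e^{i\theta}:\rho\ge0,-\pi/2\le\theta\le-\pi/6\}$; $M$ is the quotient of $\bigsqcup\overline H_i$ gluing $B_{i+1}$ to $T_i$ (indices mod $n$) by $w\mapsto e^{2\pi i/3}(w-i(b_{i+1}-a_{i+1}))+ib_i$; the identification with a punctured closed neighborhood of $p$ carries $\phi$ to the cubic differential induced by $dw^3$ (such an identification always exists). *)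

theory Defs
  imports "HOL-Analysis.Analysis"
begin

definition partial_x :: "(complex \<Rightarrow> real) \<Rightarrow> complex \<Rightarrow> real" where
  "partial_x f z = deriv (\<lambda>t. f (Complex t (Im z))) (Re z)"

definition partial_y :: "(complex \<Rightarrow> real) \<Rightarrow> complex \<Rightarrow> real" where
  "partial_y f z = deriv (\<lambda>t. f (Complex (Re z) t)) (Im z)"

definition iter_partial :: "bool list \<Rightarrow> (complex \<Rightarrow> real) \<Rightarrow> complex \<Rightarrow> real" where
  "iter_partial ds f = foldr (\<lambda>d h. if d then partial_x h else partial_y h) ds f"

definition smooth_on :: "complex set \<Rightarrow> (complex \<Rightarrow> real) \<Rightarrow> bool" where
  "smooth_on S f \<longleftrightarrow> open S \<and>
     (\<forall>ds. continuous_on S (iter_partial ds f) \<and>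
        (\<forall>z\<in>S. (\<lambda>t. iter_partial ds f (Complex t (Im z))) differentiable (at (Re z)) \<and>
                (\<lambda>t. iter_partial ds f (Complex (Re z) t)) differentiable (at (Im z))))"

definition laplacian :: "(complex \<Rightarrow> real) \<Rightarrow> complex \<Rightarrow> real" where
  "laplacian u z = partial_x (partial_x u) z + partial_y (partial_y u) z"

text \<open>Gaussian curvature of g = e^u |dw|^2.\<close>
definition gauss_curv :: "(complex \<Rightarrow> real) \<Rightarrow> complex \<Rightarrow> real" where
  "gauss_curv u w = - (1/2) * exp (- u w) * laplacian u w"

text \<open>Squared g-norm of the cubic differential phi(w) dw^3.\<close>
definition cubic_norm_sq :: "(complex \<Rightarrow> real) \<Rightarrow> (complex \<Rightarrow> complex) \<Rightarrow> complex \<Rightarrow> real" where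
  "cubic_norm_sq u \<phi> w = exp (- 3 * u w) * (cmod (\<phi> w))\<^sup>2"

definition closed_half_plane :: "complex set" where
  "closed_half_plane = {w. Re w \<ge> 0}"

definition top_sector :: "real \<Rightarrow> complex set" where
  "top_sector b = {\<i> * of_real b + of_real \<rho> * cis \<theta> | \<rho> \<theta>. \<rho> \<ge> 0 \<and> pi/6 \<le> \<theta> \<and> \<theta> \<le> pi/2}"

definition bot_sector :: "real \<Rightarrow> real \<Rightarrow> complex set" where
  "bot_sector a b = {\<i> * of_real (b - a) + of_real \<rho> * cis \<theta> | \<rho> \<theta>. \<rho> \<ge> 0 \<and> - pi/2 \<le> \<theta> \<and> \<theta> \<le> - pi/6}"

text \<open>Gluing map from B_{i+1} (parameters a', b') to T_i (parameter b).\<close>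
definition glue_map :: "real \<Rightarrow> real \<Rightarrow> real \<Rightarrow> complex \<Rightarrow> complex" where
  "glue_map a' b' b w = cis (2 * pi / 3) * (w - \<i> * of_real (b' - a')) + \<i> * of_real b"

end

theory Submission
  imports Defs
begin

lemma second_deriv_test:
  fixes \<phi> \<psi> \<phi>1 \<psi>1 :: "real \<Rightarrow> real"
  assumes d: "\<delta> > 0"
    and p1: "\<And>t. \<bar>t - x\<bar> < \<delta> \<Longrightarrow> (\<phi> has_real_derivative \<phi>1 t) (at t)"
    and p2: "(\<phi>1 has_real_derivative \<phi>2) (at x)"
    and q1: "\<And>t. \<bar>t - x\<bar> < \<delta> \<Longrightarrow> (\<psi> has_real_derivative \<psi>1 t) (at t)"
    and q2: "(\<psi>1 has_real_derivative \<psi>2) (at x)"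
    and mx: "\<And>t. \<bar>t - x\<bar> < \<delta> \<Longrightarrow> \<phi> t - \<psi> t \<le> \<phi> x - \<psi> x"
  shows "\<phi>2 \<le> \<psi>2"
proof (rule ccontr)
  assume "\<not> \<phi>2 \<le> \<psi>2"
  hence pos: "\<phi>2 - \<psi>2 > 0" by simp
  define h where "h = (\<lambda>t. \<phi> t - \<psi> t)"
  define h1 where "h1 = (\<lambda>t. \<phi>1 t - \<psi>1 t)"
  have hd: "\<And>t. \<bar>t - x\<bar> < \<delta> \<Longrightarrow> (h has_real_derivative h1 t) (at t)"
    unfolding h_def h1_def using p1 q1 by (intro derivative_intros) auto
  have h1d: "(h1 has_real_derivative \<phi>2 - \<psi>2) (at x)"
    unfolding h1_def using p2 q2 by (intro derivative_intros) auto
  have "h1 x = 0"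
    apply (rule DERIV_local_max[OF hd[of x] d])
    using d apply simp
    using mx unfolding h_def by (simp add: abs_minus_commute)
  obtain e where e: "e > 0" "\<And>k. k > 0 \<Longrightarrow> k < e \<Longrightarrow> h1 x < h1 (x + k)"
    using DERIV_pos_inc_right[OF h1d pos] by blast
  define t where "t = x + min \<delta> e / 2"
  have xt: "x < t" using d e by (simp add: t_def)
  have tx: "\<bar>t - x\<bar> < \<delta>" using d e by (simp add: t_def)
  obtain z where z: "z > x" "z < t" "h t - h x = (t - x) * h1 z"
    using MVT2[OF xt, of h h1] hd tx by (smt (verit) abs_of_nonneg)
  have "h1 z > 0"
    using e(2)[of "z - x"] z `h1 x = 0` d e by (simp add: t_def)
  hence "h t > h x" using z xt by (smt (verit) mult_pos_pos)
  thus False using mx[OF tx] unfolding h_def by simp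
qed

lemma iter_partial_simps[simp]:
  "iter_partial [] f = f" "iter_partial [True] f = partial_x f" "iter_partial [False] f = partial_y f"
  by (simp_all add: iter_partial_def)

lemma lap_compare:
  assumes sm: "smooth_on S u" and zS: "ball z \<delta> \<subseteq> S" and d: "\<delta> > 0"
    and bx1: "\<And>t. \<bar>t - Re z\<bar> < \<delta> \<Longrightarrow> ((\<lambda>t. B (Complex t (Im z))) has_real_derivative Bx1 t) (at t)"
    and bx2: "(Bx1 has_real_derivative Bx2) (at (Re z))"
    and by1: "\<And>t. \<bar>t - Im z\<bar> < \<delta> \<Longrightarrow> ((\<lambda>t. B (Complex (Re z) t)) has_real_derivative By1 t) (at t)"
    and by2: "(By1 has_real_derivative By2) (at (Im z))"
    and mx: "\<And>w. w \<in> ball z \<delta> \<Longrightarrow> u w - B w \<le> u z - B z"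
  shows "laplacian u z \<le> Bx2 + By2"
proof -
  from sm have cont: "\<And>ds. \<forall>z\<in>S. (\<lambda>t. iter_partial ds u (Complex t (Im z))) differentiable (at (Re z)) \<and>
                (\<lambda>t. iter_partial ds u (Complex (Re z) t)) differentiable (at (Im z))"
    unfolding smooth_on_def by blast
  have zin: "z \<in> S" using zS d by auto
  define \<phi> where "\<phi> = (\<lambda>t. u (Complex t (Im z)))"
  define \<theta> where "\<theta> = (\<lambda>t. u (Complex (Re z) t))"
  have inx: "Complex t (Im z) \<in> ball z \<delta>" if "\<bar>t - Re z\<bar> < \<delta>" for t
    using that by (simp add: dist_norm cmod_def complex_eq_iff)
  have iny: "Complex (Re z) t \<in> ball z \<delta>" if "\<bar>t - Im z\<bar> < \<delta>" for t
    using that by (simp add: dist_norm cmod_def complex_eq_iff)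
  have phd: "(\<phi> has_real_derivative deriv \<phi> t) (at t)" if "\<bar>t - Re z\<bar> < \<delta>" for t
  proof -
    have "Complex t (Im z) \<in> S" using inx[OF that] zS by auto
    from bspec[OF cont[of "[]"] this] have "(\<lambda>s. u (Complex s (Im z))) differentiable (at t)" by simp
    thus ?thesis unfolding \<phi>_def using DERIV_deriv_iff_real_differentiable by blast
  qed
  have chd: "(\<theta> has_real_derivative deriv \<theta> t) (at t)" if "\<bar>t - Im z\<bar> < \<delta>" for t
  proof -
    have "Complex (Re z) t \<in> S" using iny[OF that] zS by auto
    from bspec[OF cont[of "[]"] this] have "(\<lambda>s. u (Complex (Re z) s)) differentiable (at t)" by simp
    thus ?thesis unfolding \<theta>_def using DERIV_deriv_iff_real_differentiable by blast
  qed
  have px: "(\<lambda>t. partial_x u (Complex t (Im z))) = deriv \<phi>"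
    by (rule ext) (simp add: partial_x_def \<phi>_def)
  have py: "(\<lambda>t. partial_y u (Complex (Re z) t)) = deriv \<theta>"
    by (rule ext) (simp add: partial_y_def \<theta>_def)
  have "(deriv \<phi>) differentiable (at (Re z))" using bspec[OF cont[of "[True]"] zin] px by simp
  hence phd2: "(deriv \<phi> has_real_derivative deriv (deriv \<phi>) (Re z)) (at (Re z))"
    using DERIV_deriv_iff_real_differentiable by blast
  have "(deriv \<theta>) differentiable (at (Im z))" using bspec[OF cont[of "[False]"] zin] py by simp
  hence chd2: "(deriv \<theta> has_real_derivative deriv (deriv \<theta>) (Im z)) (at (Im z))"
    using DERIV_deriv_iff_real_differentiable by blast
  have lx: "partial_x (partial_x u) z = deriv (deriv \<phi>) (Re z)"
    unfolding partial_x_def[of "partial_x u"] using px by simp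
  have ly: "partial_y (partial_y u) z = deriv (deriv \<theta>) (Im z)"
    unfolding partial_y_def[of "partial_y u"] using py by simp
  have zx: "Complex (Re z) (Im z) = z" by simp
  have A: "deriv (deriv \<phi>) (Re z) \<le> Bx2"
    apply (rule second_deriv_test[OF d phd phd2 bx1 bx2])
      apply simp apply simp
    using mx[OF inx] unfolding \<phi>_def by (simp add: zx)
  have B: "deriv (deriv \<theta>) (Im z) \<le> By2"
    apply (rule second_deriv_test[OF d chd chd2 by1 by2])
      apply simp apply simp
    using mx[OF iny] unfolding \<theta>_def by (simp add: zx)
  show ?thesis unfolding laplacian_def lx ly using A B by simp
qed

lemma radial_1d:
  assumes U: "open U"
    and g1: "\<And>s. s \<in> U \<Longrightarrow> (g has_real_derivative g1 s) (at s)"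
    and g2: "\<And>s. s \<in> U \<Longrightarrow> (g1 has_real_derivative g2 s) (at s)"
  shows "(x - a)^2 + Y \<in> U \<Longrightarrow> ((\<lambda>t. L * g ((t - a)^2 + Y)) has_real_derivative L * (g1 ((x-a)^2 + Y) * (2 * (x - a)))) (at x)"
    and "(x - a)^2 + Y \<in> U \<Longrightarrow> ((\<lambda>t. L * (g1 ((t - a)^2 + Y) * (2 * (t - a)))) has_real_derivative
           L * (g2 ((x-a)^2 + Y) * (4 * (x - a)^2) + 2 * g1 ((x-a)^2 + Y))) (at x)"
proof -
  assume xU: "(x - a)^2 + Y \<in> U"
  have in1: "((\<lambda>t. (t - a)^2 + Y) has_real_derivative 2 * (x - a)) (at x)"
    by (auto intro!: derivative_eq_intros)
  show "((\<lambda>t. L * g ((t - a)^2 + Y)) has_real_derivative L * (g1 ((x-a)^2 + Y) * (2 * (x - a)))) (at x)"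
    using DERIV_chain2[OF g1[OF xU] in1] by (intro DERIV_cmult) simp
next
  assume xU: "(x - a)^2 + Y \<in> U"
  have in1: "((\<lambda>t. (t - a)^2 + Y) has_real_derivative 2 * (x - a)) (at x)"
    by (auto intro!: derivative_eq_intros)
  have c: "((\<lambda>t. g1 ((t - a)^2 + Y)) has_real_derivative g2 ((x-a)^2 + Y) * (2 * (x - a))) (at x)"
    using DERIV_chain2[OF g2[OF xU] in1] by simp
  have l: "((\<lambda>t. 2 * (t - a)) has_real_derivative 2) (at x)"
    by (auto intro!: derivative_eq_intros)
  have "((\<lambda>t. g1 ((t - a)^2 + Y) * (2 * (t - a))) has_real_derivative
          g2 ((x-a)^2 + Y) * (2 * (x - a)) * (2 * (x - a)) + g1 ((x-a)^2 + Y) * 2) (at x)"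
    using DERIV_mult[OF c l] by (simp add: mult.commute)
  hence "((\<lambda>t. L * (g1 ((t - a)^2 + Y) * (2 * (t - a)))) has_real_derivative
          L * (g2 ((x-a)^2 + Y) * (2 * (x - a)) * (2 * (x - a)) + g1 ((x-a)^2 + Y) * 2)) (at x)"
    by (rule DERIV_cmult)
  thus "((\<lambda>t. L * (g1 ((t - a)^2 + Y) * (2 * (t - a)))) has_real_derivative
           L * (g2 ((x-a)^2 + Y) * (4 * (x - a)^2) + 2 * g1 ((x-a)^2 + Y))) (at x)"
    by (simp add: power2_eq_square algebra_simps)
qed

lemma cmod_sq_complex: "(cmod (Complex t y - c))^2 = (t - Re c)^2 + (y - Im c)^2"
  by (simp add: cmod_power2)

lemma lap_compare_radial:
  assumes sm: "smooth_on S u" and zS: "ball z \<delta> \<subseteq> S" and d: "\<delta> > 0"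
    and U: "open U"
    and g1: "\<And>s. s \<in> U \<Longrightarrow> (g has_real_derivative g1 s) (at s)"
    and g2: "\<And>s. s \<in> U \<Longrightarrow> (g1 has_real_derivative g2 s) (at s)"
    and inU: "\<And>w. w \<in> ball z \<delta> \<Longrightarrow> (cmod (w - c))^2 \<in> U"
    and mx: "\<And>w. w \<in> ball z \<delta> \<Longrightarrow> u w - L * g ((cmod (w - c))^2) \<le> u z - L * g ((cmod (z - c))^2)"
  shows "laplacian u z \<le> L * (4 * (cmod (z - c))^2 * g2 ((cmod (z - c))^2) + 4 * g1 ((cmod (z - c))^2))"
proof -
  define B where "B = (\<lambda>w. L * g ((cmod (w - c))^2))"
  have inx: "Complex t (Im z) \<in> ball z \<delta>" if "\<bar>t - Re z\<bar> < \<delta>" for t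
    using that by (simp add: dist_norm cmod_def complex_eq_iff)
  have iny: "Complex (Re z) t \<in> ball z \<delta>" if "\<bar>t - Im z\<bar> < \<delta>" for t
    using that by (simp add: dist_norm cmod_def complex_eq_iff)
  have zz: "z \<in> ball z \<delta>" using d by simp
  have Bx: "(\<lambda>t. B (Complex t (Im z))) = (\<lambda>t. L * g ((t - Re c)^2 + (Im z - Im c)^2))"
    by (simp add: B_def cmod_sq_complex)
  have By: "(\<lambda>t. B (Complex (Re z) t)) = (\<lambda>t. L * g ((t - Im c)^2 + (Re z - Re c)^2))"
    by (rule ext) (simp add: B_def cmod_sq_complex add.commute)
  have s1: "(cmod (z - c))^2 = (Re z - Re c)^2 + (Im z - Im c)^2" by (simp add: cmod_power2)
  have s2: "(cmod (z - c))^2 = (Im z - Im c)^2 + (Re z - Re c)^2" by (simp add: cmod_power2)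
  have "laplacian u z \<le> L * (g2 ((Re z - Re c)^2 + (Im z - Im c)^2) * (4 * (Re z - Re c)^2) + 2 * g1 ((Re z - Re c)^2 + (Im z - Im c)^2))
     + L * (g2 ((Im z - Im c)^2 + (Re z - Re c)^2) * (4 * (Im z - Im c)^2) + 2 * g1 ((Im z - Im c)^2 + (Re z - Re c)^2))"
  proof (rule lap_compare[OF sm zS d, where B = B])
    show "((\<lambda>t. B (Complex t (Im z))) has_real_derivative
       L * (g1 ((t - Re c)^2 + (Im z - Im c)^2) * (2 * (t - Re c)))) (at t)" if "\<bar>t - Re z\<bar> < \<delta>" for t
      unfolding Bx apply (rule radial_1d(1)[OF U g1 g2]) apply assumption+
      using inU[OF inx[OF that]] by (simp add: cmod_sq_complex)
    show "((\<lambda>t. L * (g1 ((t - Re c)^2 + (Im z - Im c)^2) * (2 * (t - Re c)))) has_real_derivative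
       L * (g2 ((Re z - Re c)^2 + (Im z - Im c)^2) * (4 * (Re z - Re c)^2) + 2 * g1 ((Re z - Re c)^2 + (Im z - Im c)^2))) (at (Re z))"
      apply (rule radial_1d(2)[OF U g1 g2]) apply assumption+
      using inU[OF zz] s1 by simp
    show "((\<lambda>t. B (Complex (Re z) t)) has_real_derivative
       L * (g1 ((t - Im c)^2 + (Re z - Re c)^2) * (2 * (t - Im c)))) (at t)" if "\<bar>t - Im z\<bar> < \<delta>" for t
      unfolding By apply (rule radial_1d(1)[OF U g1 g2]) apply assumption+
      using inU[OF iny[OF that]] by (simp add: cmod_sq_complex add.commute)
    show "((\<lambda>t. L * (g1 ((t - Im c)^2 + (Re z - Re c)^2) * (2 * (t - Im c)))) has_real_derivative
       L * (g2 ((Im z - Im c)^2 + (Re z - Re c)^2) * (4 * (Im z - Im c)^2) + 2 * g1 ((Im z - Im c)^2 + (Re z - Re c)^2))) (at (Im z))"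
      apply (rule radial_1d(2)[OF U g1 g2]) apply assumption+
      using inU[OF zz] s2 by simp
    show "u w - B w \<le> u z - B z" if "w \<in> ball z \<delta>" for w
      using mx[OF that] by (simp add: B_def)
  qed
  also have "\<dots> = L * (4 * (cmod (z - c))^2 * g2 ((cmod (z - c))^2) + 4 * g1 ((cmod (z - c))^2))"
    unfolding s1 by (simp add: add.commute algebra_simps)
  finally show ?thesis .
qed

definition FF :: "real \<Rightarrow> real" where "FF x = 2 * exp x - 2 * exp (- 2 * x)"

lemma FF_less: "x < y \<Longrightarrow> FF x < FF y"
  unfolding FF_def by (smt (verit) exp_less_mono)

lemma FF_le_imp: "FF x \<le> FF y \<Longrightarrow> x \<le> y"
  by (metis FF_less not_le)

lemma exp_neg_upper: fixes y :: real assumes "y \<ge> 0" shows "exp (- y) \<le> 1 - y + y^2/2"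
proof -
  have e: "1 + y + y^2/2 \<le> exp y" by (rule exp_lower_Taylor_quadratic[OF assms])
  have p: "1 + y + y^2/2 > 0" using assms by (simp add: add_pos_nonneg)
  have q: "(1 - y + y^2/2) * (1 + y + y^2/2) = 1 + y^4/4"
    by (simp add: algebra_simps power2_eq_square power4_eq_xxxx)
  have "exp (- y) * (1 + y + y^2/2) \<le> exp (-y) * exp y"
    using e by (intro mult_left_mono) auto
  also have "\<dots> = 1" by (simp flip: exp_add)
  also have "\<dots> \<le> (1 - y + y^2/2) * (1 + y + y^2/2)" unfolding q by simp
  finally show ?thesis using p by (meson mult_le_cancel_right_pos)
qed

lemma FF_lower: fixes x :: real assumes "x \<ge> 0" shows "FF x \<ge> 6 * x - 3 * x^2"
proof -
  have 1: "1 + x + x^2/2 \<le> exp x" by (rule exp_lower_Taylor_quadratic[OF assms])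
  have 2: "exp (- (2*x)) \<le> 1 - 2*x + (2*x)^2/2" by (rule exp_neg_upper) (use assms in simp)
  have 3: "(2*x)^2/2 = 2 * x^2" by (simp add: power2_eq_square)
  have 4: "- 2 * x = - (2 * x)" by simp
  show ?thesis unfolding FF_def 4 using 1 2 3 by linarith
qed

lemma lap_from_eqn:
  assumes "gauss_curv u w = -1 + cubic_norm_sq u (\<lambda>_. 1) w"
  shows "laplacian u w = FF (u w)"
proof -
  define U where "U = u w"
  define L where "L = laplacian u w"
  have h: "- (1/2) * exp (- U) * L = -1 + exp (- 3 * U)"
    using assms by (simp add: gauss_curv_def cubic_norm_sq_def U_def L_def)
  have "L = -2 * exp U * (- (1/2) * exp (- U) * L)"
    by (simp add: exp_minus)
  also have "\<dots> = -2 * exp U * (-1 + exp (- 3 * U))" by (simp only: h)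
  also have "\<dots> = 2 * exp U - 2 * (exp U * exp (- 3 * U))" by (simp add: algebra_simps)
  also have "exp U * exp (- 3 * U) = exp (- 2 * U)" by (simp flip: exp_add)
  finally show ?thesis by (simp add: FF_def U_def L_def)
qed

lemma nonneg_from_eqn:
  assumes "gauss_curv u w = -1 + cubic_norm_sq u (\<lambda>_. 1) w" "gauss_curv u w \<le> 0"
  shows "u w \<ge> 0"
proof -
  have "exp (- 3 * u w) \<le> 1" using assms by (simp add: cubic_norm_sq_def)
  thus ?thesis by simp
qed

lemma liou_ineq:
  fixes \<epsilon> b :: real
  assumes e: "0 < \<epsilon>" "\<epsilon> \<le> 1/2" and b: "b \<ge> \<epsilon>"
  shows "\<epsilon> * exp b \<le> FF b"
proof -
  have "1 + 3 * b \<le> exp (3 * b)" by (rule exp_ge_add_one_self)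
  hence "exp (- (3 * b)) \<le> 1 / (1 + 3 * b)"
    using e b by (simp add: exp_minus divide_simps)
  also have "\<dots> \<le> 1 / (1 + 3 * \<epsilon>)" using e b by (simp add: frac_le)
  finally have A: "exp (- (3 * b)) \<le> 1 / (1 + 3 * \<epsilon>)" .
  have B0: "(2 - \<epsilon>) * (1 + 3 * \<epsilon>) = 2 + \<epsilon> * (5 - 3 * \<epsilon>)" by (simp add: algebra_simps)
  have B1: "\<epsilon> * (5 - 3 * \<epsilon>) \<ge> 0" using e by simp
  have B: "2 / (1 + 3 * \<epsilon>) \<le> 2 - \<epsilon>" using e B0 B1 by (simp add: divide_simps)
  have C: "2 * exp (- (3 * b)) \<le> 2 - \<epsilon>" using A B by simp
  have D: "exp (- 2 * b) = exp b * exp (- (3 * b))" by (simp flip: exp_add)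
  have "FF b - \<epsilon> * exp b = exp b * (2 - \<epsilon> - 2 * exp (- (3 * b)))"
    unfolding FF_def D by (simp add: algebra_simps)
  also have "\<dots> \<ge> 0" using C by simp
  finally show ?thesis by simp
qed

lemma liouville_step:
  fixes u :: "complex \<Rightarrow> real" and w :: complex
  assumes sm: "smooth_on S u" and hS: "closed_half_plane \<subseteq> S"
    and eq: "\<And>z. z \<in> closed_half_plane \<Longrightarrow> laplacian u z = FF (u z)"
    and w8: "Re w \<ge> 8"
  shows "u w \<le> 32 / (Re w)^2"
proof (rule ccontr)
  assume neg: "\<not> u w \<le> 32 / (Re w)^2"
  define \<rho> where "\<rho> = Re w / 2"
  have \<rho>4: "\<rho> \<ge> 4" using w8 by (simp add: \<rho>_def)
  have \<rho>p: "\<rho> > 0" "\<rho>^2 > 0" using \<rho>4 by auto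
  define \<epsilon> where "\<epsilon> = 8 / \<rho>^2"
  have e32: "32 / (Re w)^2 = \<epsilon>" by (simp add: \<epsilon>_def \<rho>_def power2_eq_square)
  have ep: "\<epsilon> > 0" using \<rho>p by (simp add: \<epsilon>_def)
  have e12: "\<epsilon> \<le> 1/2"
  proof -
    have "(4::real)^2 \<le> \<rho>^2" by (rule power_mono) (use \<rho>4 in auto)
    hence "\<rho>^2 \<ge> 16" by simp
    thus ?thesis by (simp add: \<epsilon>_def divide_simps)
  qed
  define c where "c = \<epsilon> - ln (8 / \<rho>^2)"
  define Lc where "Lc = ln (8 * \<rho>^2) + c"
  define g where "g = (\<lambda>s::real. Lc - 2 * ln (\<rho>^2 - s))"
  define g1 where "g1 = (\<lambda>s::real. 2 / (\<rho>^2 - s))"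
  define g2 where "g2 = (\<lambda>s::real. 2 / (\<rho>^2 - s)^2)"
  define U where "U = {..<\<rho>^2}"
  have Uo: "open U" by (simp add: U_def)
  have dg1: "(g has_real_derivative g1 s) (at s)" if "s \<in> U" for s
  proof -
    have "\<rho>^2 - s > 0" using that by (simp add: U_def)
    thus ?thesis unfolding g_def g1_def
      by (auto intro!: derivative_eq_intros simp: field_simps)
  qed
  have dg2: "(g1 has_real_derivative g2 s) (at s)" if "s \<in> U" for s
  proof -
    have "\<rho>^2 - s > 0" using that by (simp add: U_def)
    thus ?thesis unfolding g1_def g2_def
      by (auto intro!: derivative_eq_intros simp: field_simps power2_eq_square)
  qed
  have g0: "g 0 = \<epsilon>"
  proof -
    have "ln (8 * \<rho>^2) = ln 8 + ln (\<rho>^2)" using \<rho>p by (simp add: ln_mult)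
    moreover have "ln (8 / \<rho>^2) = ln 8 - ln (\<rho>^2)" using \<rho>p by (simp add: ln_div)
    ultimately show ?thesis by (simp add: g_def Lc_def c_def)
  qed
  have gmono: "g s \<ge> \<epsilon>" if "0 \<le> s" "s < \<rho>^2" for s
  proof -
    have "ln (\<rho>^2 - s) \<le> ln (\<rho>^2)" using that by (intro ln_mono) auto
    thus ?thesis using g0 by (simp add: g_def)
  qed
  have uc: "continuous_on S u"
    using sm unfolding smooth_on_def by (metis iter_partial_simps(1))
  have ballH: "cball w \<rho> \<subseteq> closed_half_plane"
  proof
    fix z assume "z \<in> cball w \<rho>"
    hence "cmod (w - z) \<le> \<rho>" by (simp add: dist_norm)
    moreover have "\<bar>Re (w - z)\<bar> \<le> cmod (w - z)" by (rule abs_Re_le_cmod)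
    ultimately have "Re z \<ge> Re w - \<rho>" by simp
    thus "z \<in> closed_half_plane" using \<rho>p by (simp add: closed_half_plane_def \<rho>_def)
  qed
  obtain M0 where M0: "\<And>z. z \<in> cball w \<rho> \<Longrightarrow> u z \<le> M0"
  proof -
    have "continuous_on (cball w \<rho>) u" using uc ballH hS by (meson continuous_on_subset order_trans)
    from continuous_attains_sup[OF compact_cball _ this] \<rho>p
    obtain z0 where "\<forall>y\<in>cball w \<rho>. u y \<le> u z0" by auto
    thus ?thesis using that by blast
  qed
  define e1 where "e1 = min (\<rho>^2/2) (exp ((Lc - M0 - 1)/2))"
  have e1p: "e1 > 0" using \<rho>p by (simp add: e1_def)
  have "e1 \<le> \<rho>^2/2" by (simp add: e1_def)
  hence e1l: "e1 < \<rho>^2" using \<rho>p(2) by linarith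
  have e1ln: "ln e1 \<le> (Lc - M0 - 1)/2"
  proof -
    have "ln e1 \<le> ln (exp ((Lc - M0 - 1)/2))" using e1p by (intro ln_mono) (auto simp: e1_def)
    thus ?thesis by simp
  qed
  define \<rho>1 where "\<rho>1 = sqrt (\<rho>^2 - e1)"
  have \<rho>1p: "\<rho>1 > 0" using e1l by (simp add: \<rho>1_def)
  have \<rho>1sq: "\<rho>1^2 = \<rho>^2 - e1" using e1l by (simp add: \<rho>1_def)
  have \<rho>1l: "\<rho>1 < \<rho>"
  proof -
    have "\<rho>1^2 < \<rho>^2" using \<rho>1sq e1p by simp
    thus ?thesis using \<rho>p(1) power_less_imp_less_base[of \<rho>1 2 \<rho>] by simp
  qed
  define \<Phi> where "\<Phi> = (\<lambda>z. u z - 1 * g ((cmod (z - w))^2))"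
  have Kc: "cball w \<rho>1 \<subseteq> cball w \<rho>" using \<rho>1l by auto
  have sK: "(cmod (z - w))^2 < \<rho>^2" if "z \<in> cball w \<rho>1" for z
  proof -
    have "cmod (z - w) \<le> \<rho>1" using that by (simp add: dist_norm norm_minus_commute)
    hence "cmod (z - w) < \<rho>" using \<rho>1l by simp
    thus ?thesis by (intro power_strict_mono) auto
  qed
  have contPhi: "continuous_on (cball w \<rho>1) \<Phi>"
  proof -
    have "continuous_on (cball w \<rho>1) u" using uc Kc ballH hS by (meson continuous_on_subset order_trans)
    moreover have "continuous_on (cball w \<rho>1) (\<lambda>z. ln (\<rho>^2 - (cmod (z - w))^2))"
      using sK by (intro continuous_intros) force
    hence "continuous_on (cball w \<rho>1) (\<lambda>z. 1 * (Lc - 2 * ln (\<rho>^2 - (cmod (z - w))^2)))"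
      by (intro continuous_on_mult continuous_on_diff continuous_on_const)
    ultimately show ?thesis unfolding \<Phi>_def g_def by (rule continuous_on_diff)
  qed
  obtain \<zeta> where \<zeta>K: "\<zeta> \<in> cball w \<rho>1" and \<zeta>max: "\<And>y. y \<in> cball w \<rho>1 \<Longrightarrow> \<Phi> y \<le> \<Phi> \<zeta>"
    using continuous_attains_sup[OF compact_cball _ contPhi] \<rho>1p by auto
  have Phiw: "\<Phi> w > 0" using neg e32 g0 by (simp add: \<Phi>_def)
  have Phiz: "\<Phi> \<zeta> > 0" using \<zeta>max[of w] Phiw \<rho>1p by simp
  have inner: "cmod (\<zeta> - w) < \<rho>1"
  proof (rule ccontr)
    assume "\<not> cmod (\<zeta> - w) < \<rho>1"
    hence eqr: "cmod (\<zeta> - w) = \<rho>1" using \<zeta>K by (simp add: dist_norm norm_minus_commute)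
    have "g ((cmod (\<zeta> - w))^2) = Lc - 2 * ln e1" unfolding eqr \<rho>1sq g_def by simp
    also have "\<dots> \<ge> M0 + 1" using e1ln by simp
    finally have "g ((cmod (\<zeta> - w))^2) \<ge> M0 + 1" .
    moreover have "u \<zeta> \<le> M0" using M0 Kc \<zeta>K by auto
    ultimately have "\<Phi> \<zeta> < 0" by (simp add: \<Phi>_def)
    thus False using Phiz by simp
  qed
  define \<delta> where "\<delta> = \<rho>1 - cmod (\<zeta> - w)"
  have dp: "\<delta> > 0" using inner by (simp add: \<delta>_def)
  have bK: "ball \<zeta> \<delta> \<subseteq> cball w \<rho>1"
  proof
    fix y assume "y \<in> ball \<zeta> \<delta>"
    hence "cmod (\<zeta> - y) < \<delta>" by (simp add: dist_norm)
    moreover have "cmod (y - w) \<le> cmod (y - \<zeta>) + cmod (\<zeta> - w)" by (rule norm_diff_triangle_ineq[of y \<zeta> \<zeta> w, simplified])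
    ultimately show "y \<in> cball w \<rho>1" by (simp add: dist_norm norm_minus_commute \<delta>_def)
  qed
  have bS: "ball \<zeta> \<delta> \<subseteq> S" using bK Kc ballH hS by blast
  define s where "s = (cmod (\<zeta> - w))^2"
  have s0: "s \<ge> 0" "s < \<rho>^2" using sK[OF \<zeta>K] by (auto simp: s_def)
  have lap: "laplacian u \<zeta> \<le> 1 * (4 * s * g2 s + 4 * g1 s)"
    unfolding s_def
  proof (rule lap_compare_radial[OF sm bS dp Uo dg1 dg2])
    show "(cmod (y - w))^2 \<in> U" if "y \<in> ball \<zeta> \<delta>" for y
      using sK bK that by (auto simp: U_def)
    show "u y - 1 * g ((cmod (y - w))^2) \<le> u \<zeta> - 1 * g ((cmod (\<zeta> - w))^2)" if "y \<in> ball \<zeta> \<delta>" for y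
      using \<zeta>max[of y] bK that by (auto simp: \<Phi>_def)
  qed
  have pos: "\<rho>^2 - s > 0" using s0 by simp
  have Qeq: "4 * s * g2 s + 4 * g1 s = exp (g s) * exp (- c)"
  proof -
    have "exp (g s) = exp Lc / exp (2 * ln (\<rho>^2 - s))" by (simp add: g_def exp_diff)
    also have "exp (2 * ln (\<rho>^2 - s)) = (\<rho>^2 - s)^2"
    proof -
      have "exp (2 * ln (\<rho>^2 - s)) = exp (ln (\<rho>^2 - s)) * exp (ln (\<rho>^2 - s))"
        by (simp only: mult_2 exp_add)
      also have "\<dots> = (\<rho>^2 - s)^2" using pos by (simp add: power2_eq_square)
      finally show ?thesis .
    qed
    also have "exp Lc = 8 * \<rho>^2 * exp c" using \<rho>p by (simp add: Lc_def exp_add)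
    finally have "exp (g s) = 8 * \<rho>^2 * exp c / (\<rho>^2 - s)^2" .
    hence "exp (g s) * exp (- c) = 8 * \<rho>^2 / (\<rho>^2 - s)^2" by (simp add: exp_minus field_simps)
    also have "\<dots> = 4 * s * g2 s + 4 * g1 s"
    proof -
      define q where "q = \<rho>^2 - s"
      have qp: "q > 0" using pos by (simp add: q_def)
      have r: "\<rho>^2 = q + s" by (simp add: q_def)
      have "4 * s * g2 s + 4 * g1 s = 8 * s / q^2 + 8 / q" by (simp add: g1_def g2_def q_def)
      also have "\<dots> = (8 * s + 8 * q) / q^2" using qp by (simp add: field_simps power2_eq_square)
      also have "\<dots> = 8 * \<rho>^2 / q^2" by (simp add: r algebra_simps)
      finally show ?thesis by (simp add: q_def)
    qed
    finally show ?thesis by simp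
  qed
  have ec: "exp (- c) \<le> \<epsilon>"
  proof -
    have "exp (- c) = exp (- \<epsilon>) * (8 / \<rho>^2)" using \<rho>p by (simp add: c_def exp_diff exp_minus field_simps)
    also have "\<dots> \<le> 1 * (8 / \<rho>^2)" using \<rho>p ep by (intro mult_right_mono) auto
    finally show ?thesis by (simp add: \<epsilon>_def)
  qed
  have gs: "g s \<ge> \<epsilon>" using gmono s0 by simp
  have zH: "\<zeta> \<in> closed_half_plane" using \<zeta>K Kc ballH by blast
  have "FF (u \<zeta>) \<le> exp (g s) * exp (- c)" using lap Qeq eq[OF zH] by simp
  also have "\<dots> \<le> exp (g s) * \<epsilon>" using ec by simp
  also have "\<dots> \<le> FF (g s)" using liou_ineq[OF ep e12 gs] by (simp add: mult.commute)
  finally have "u \<zeta> \<le> g s" by (rule FF_le_imp)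
  hence "\<Phi> \<zeta> \<le> 0" by (simp add: \<Phi>_def s_def)
  thus False using Phiz by simp
qed

lemma sqrt_chain:
  fixes f f1 f2 :: "real \<Rightarrow> real"
  assumes d1: "\<And>r. r > 0 \<Longrightarrow> (f has_real_derivative f1 r) (at r)"
    and d2: "\<And>r. r > 0 \<Longrightarrow> (f1 has_real_derivative f2 r) (at r)"
    and s: "s > 0"
  shows "((\<lambda>s. f (sqrt s)) has_real_derivative f1 (sqrt s) / (2 * sqrt s)) (at s)"
    and "((\<lambda>s. f1 (sqrt s) / (2 * sqrt s)) has_real_derivative
            f2 (sqrt s) / (4 * s) - f1 (sqrt s) / (4 * s * sqrt s)) (at s)"
    and "4 * s * (f2 (sqrt s) / (4 * s) - f1 (sqrt s) / (4 * s * sqrt s)) + 4 * (f1 (sqrt s) / (2 * sqrt s))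
          = f2 (sqrt s) + f1 (sqrt s) / sqrt s"
proof -
  have sq: "sqrt s > 0" using s by simp
  have ds: "(sqrt has_real_derivative inverse (sqrt s) / 2) (at s)" using DERIV_real_sqrt[OF s] .
  have A: "((\<lambda>s. f (sqrt s)) has_real_derivative f1 (sqrt s) * (inverse (sqrt s) / 2)) (at s)"
    using DERIV_chain2[OF d1[OF sq] ds] .
  show "((\<lambda>s. f (sqrt s)) has_real_derivative f1 (sqrt s) / (2 * sqrt s)) (at s)"
    using A by (simp add: divide_simps mult.commute)
  have B: "((\<lambda>s. f1 (sqrt s)) has_real_derivative f2 (sqrt s) * (inverse (sqrt s) / 2)) (at s)"
    using DERIV_chain2[OF d2[OF sq] ds] .
  have C: "((\<lambda>s. 2 * sqrt s) has_real_derivative 2 * (inverse (sqrt s) / 2)) (at s)"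
    using DERIV_cmult[OF ds] .
  have E: "((\<lambda>s. f1 (sqrt s) / (2 * sqrt s)) has_real_derivative
     (f2 (sqrt s) * (inverse (sqrt s) / 2) * (2 * sqrt s) - f1 (sqrt s) * (2 * (inverse (sqrt s) / 2))) / (2 * sqrt s * (2 * sqrt s))) (at s)"
    using DERIV_divide[OF B C] sq by simp
  have F: "(f2 (sqrt s) * (inverse (sqrt s) / 2) * (2 * sqrt s) - f1 (sqrt s) * (2 * (inverse (sqrt s) / 2))) / (2 * sqrt s * (2 * sqrt s))
      = f2 (sqrt s) / (4 * s) - f1 (sqrt s) / (4 * s * sqrt s)"
  proof -
    have ss: "sqrt s * sqrt s = s" using s by simp
    show ?thesis using sq s by (simp add: field_simps ss)
  qed
  show "((\<lambda>s. f1 (sqrt s) / (2 * sqrt s)) has_real_derivative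
            f2 (sqrt s) / (4 * s) - f1 (sqrt s) / (4 * s * sqrt s)) (at s)"
    using E unfolding F .
  show "4 * s * (f2 (sqrt s) / (4 * s) - f1 (sqrt s) / (4 * s * sqrt s)) + 4 * (f1 (sqrt s) / (2 * sqrt s))
          = f2 (sqrt s) + f1 (sqrt s) / sqrt s"
    using sq s by (simp add: field_simps)
qed

definition kk :: real where "kk = sqrt 6"
definition fd :: "real \<Rightarrow> real" where "fd r = sqrt r * exp (- kk * r)"
definition fd1 :: "real \<Rightarrow> real" where "fd1 r = fd r * (1 / (2 * r) - kk)"
definition fd2 :: "real \<Rightarrow> real" where "fd2 r = fd r * ((1 / (2 * r) - kk)^2 - 1 / (2 * r^2))"

lemma fd_deriv: assumes r: "r > 0" shows "(fd has_real_derivative fd1 r) (at r)"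
proof -
  have sq: "sqrt r > 0" using r by simp
  have D: "(fd has_real_derivative (inverse (sqrt r) / 2) * exp (- kk * r) + sqrt r * (exp (- kk * r) * (- kk))) (at r)"
  proof -
    have e: "((\<lambda>r. exp (- kk * r)) has_real_derivative exp (- kk * r) * (- kk)) (at r)"
      by (auto intro!: derivative_eq_intros)
    show ?thesis unfolding fd_def[abs_def] using DERIV_mult[OF DERIV_real_sqrt[OF r] e] by (simp add: mult_ac)
  qed
  have "(inverse (sqrt r) / 2) * exp (- kk * r) + sqrt r * (exp (- kk * r) * (- kk)) = fd1 r"
  proof -
    have ss: "sqrt r * sqrt r = r" using r by simp
    show ?thesis unfolding fd1_def fd_def using sq r by (simp add: field_simps ss)
  qed
  thus ?thesis using D by simp
qed

lemma fd1_deriv: assumes r: "r > 0" shows "(fd1 has_real_derivative fd2 r) (at r)"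
proof -
  have a: "((\<lambda>r. 1 / (2 * r) - kk) has_real_derivative - 1 / (2 * r^2)) (at r)"
    using r by (auto intro!: derivative_eq_intros simp: power2_eq_square field_simps)
  have D: "(fd1 has_real_derivative fd1 r * (1 / (2 * r) - kk) + fd r * (- 1 / (2 * r^2))) (at r)"
    unfolding fd1_def[abs_def] using DERIV_mult[OF fd_deriv[OF r] a] by (simp add: fd1_def)
  have "fd1 r * (1 / (2 * r) - kk) + fd r * (- 1 / (2 * r^2)) = fd2 r"
    unfolding fd1_def fd2_def by (simp add: algebra_simps power2_eq_square)
  thus ?thesis using D by simp
qed

lemma fd_lap: assumes r: "r > 0"
  shows "fd2 r + fd1 r / r = fd r * (6 - 2 * kk / r + 1 / (4 * r^2))"
proof -
  have k2: "kk^2 = 6" by (simp add: kk_def)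
  have "fd2 r + fd1 r / r = fd r * (kk^2 - 2 * kk / r + 1 / (4 * r^2))"
    unfolding fd2_def fd1_def using r by (simp add: field_simps power2_eq_square)
  thus ?thesis by (simp add: k2)
qed

lemma lap_compare_decay:
  assumes sm: "smooth_on S u" and bS: "ball z \<delta> \<subseteq> S" and dp: "\<delta> > 0"
    and nc: "\<And>w. w \<in> ball z \<delta> \<Longrightarrow> w \<noteq> c"
    and mx: "\<And>w. w \<in> ball z \<delta> \<Longrightarrow> u w - L * fd (cmod (w - c)) \<le> u z - L * fd (cmod (z - c))"
  shows "laplacian u z \<le> L * (fd (cmod (z - c)) * (6 - 2 * kk / cmod (z - c) + 1 / (4 * (cmod (z - c))^2)))"
proof -
  define g where "g = (\<lambda>s. fd (sqrt s))"
  define g1 where "g1 = (\<lambda>s. fd1 (sqrt s) / (2 * sqrt s))"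
  define g2 where "g2 = (\<lambda>s. fd2 (sqrt s) / (4 * s) - fd1 (sqrt s) / (4 * s * sqrt s))"
  have e: "fd (cmod (w - c)) = g ((cmod (w - c))^2)" for w by (simp add: g_def)
  have zc: "z \<noteq> c" using nc dp by simp
  have r: "cmod (z - c) > 0" using zc by simp
  have "laplacian u z \<le> L * (4 * (cmod (z - c))^2 * g2 ((cmod (z - c))^2) + 4 * g1 ((cmod (z - c))^2))"
  proof (rule lap_compare_radial[OF sm bS dp, where U = "{0<..}"])
    show "open {0::real<..}" by simp
    show "(g has_real_derivative g1 s) (at s)" if "s \<in> {0<..}" for s
      unfolding g_def g1_def using sqrt_chain(1)[OF fd_deriv fd1_deriv] that by simp
    show "(g1 has_real_derivative g2 s) (at s)" if "s \<in> {0<..}" for s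
      unfolding g1_def g2_def using sqrt_chain(2)[OF fd_deriv fd1_deriv] that by simp
    show "(cmod (w - c))^2 \<in> {0<..}" if "w \<in> ball z \<delta>" for w
      using nc[OF that] by simp
    show "u w - L * g ((cmod (w - c))^2) \<le> u z - L * g ((cmod (z - c))^2)" if "w \<in> ball z \<delta>" for w
      using mx[OF that] by (simp add: e)
  qed
  also have "4 * (cmod (z - c))^2 * g2 ((cmod (z - c))^2) + 4 * g1 ((cmod (z - c))^2)
      = fd2 (cmod (z - c)) + fd1 (cmod (z - c)) / cmod (z - c)"
    using sqrt_chain(3)[OF fd_deriv fd1_deriv, of "(cmod (z - c))^2"] r unfolding g1_def g2_def by simp
  also have "\<dots> = fd (cmod (z - c)) * (6 - 2 * kk / cmod (z - c) + 1 / (4 * (cmod (z - c))^2))"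
    by (rule fd_lap[OF r])
  finally show ?thesis .
qed

definition hh :: real where "hh = sqrt 3 / 2"

lemma hh_sq: "hh^2 = 3/4" by (simp add: hh_def power_divide)
lemma hh_bounds: "0.866 < hh" "hh < 0.8661"
proof -
  have "(1.732::real)^2 < 3" by (simp add: power2_eq_square)
  from real_less_rsqrt[OF this] have "1.732 < sqrt 3" .
  thus "0.866 < hh" by (simp add: hh_def)
  have "3 < (1.7322::real)^2" by (simp add: power2_eq_square)
  hence "sqrt 3 < sqrt ((1.7322::real)^2)" by (simp only: real_sqrt_less_iff)
  hence "sqrt 3 < 1.7322" by simp
  thus "hh < 0.8661" by (simp add: hh_def)
qed

lemma omega_eq: "cis (2 * pi / 3) = Complex (-1/2) hh"
  by (simp add: cis.ctr cos_120 sin_120 hh_def)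

lemma glue_eq: "glue_map a' b' b z = Complex (-1/2) hh * (z - \<i> * of_real (b' - a')) + \<i> * of_real b"
  by (simp add: glue_map_def omega_eq)

definition botc :: "real \<Rightarrow> real \<Rightarrow> complex \<Rightarrow> bool" where
  "botc A B z \<longleftrightarrow> Re z \<ge> 0 \<and> Im z < B - A \<and> Re z \<le> sqrt 3 * (B - A - Im z)"

lemma bot_mem: assumes "botc A B z" shows "z \<in> bot_sector A B"
proof -
  define v where "v = z - \<i> * of_real (B - A)"
  define x where "x = Re v"
  define y where "y = Im v"
  have x0: "x \<ge> 0" and y0: "y < 0" and xy: "x \<le> sqrt 3 * (- y)"
    using assms by (auto simp: botc_def x_def y_def v_def)
  define \<rho> where "\<rho> = cmod v"
  have \<rho>sq: "\<rho>^2 = x^2 + y^2" by (simp add: \<rho>_def cmod_power2 x_def y_def)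
  have "v \<noteq> 0" using y0 by (auto simp: y_def)
  hence \<rho>p: "\<rho> > 0" by (simp add: \<rho>_def)
  have xr: "x \<le> \<rho>" using abs_Re_le_cmod[of v] by (simp add: x_def \<rho>_def)
  define q where "q = x / \<rho>"
  have q0: "0 \<le> q" "q \<le> 1" using x0 xr \<rho>p by (auto simp: q_def)
  have q32: "q \<le> sqrt 3 / 2"
  proof -
    have "x^2 \<le> 3 * y^2"
    proof -
      have "x^2 \<le> (sqrt 3 * (- y))^2" using x0 xy by (intro power_mono) auto
      thus ?thesis by (simp add: power_mult_distrib)
    qed
    hence "4 * x^2 \<le> 3 * \<rho>^2" using \<rho>sq by simp
    hence "(2 * x)^2 \<le> (sqrt 3 * \<rho>)^2" by (simp add: power_mult_distrib)
    moreover have "0 \<le> sqrt 3 * \<rho>" using \<rho>p by simp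
    ultimately have "2 * x \<le> sqrt 3 * \<rho>" by (rule power2_le_imp_le)
    thus ?thesis using \<rho>p by (simp add: q_def divide_simps)
  qed
  define \<theta> where "\<theta> = - arccos q"
  have c: "cos \<theta> = q" using q0 by (simp add: \<theta>_def)
  have s: "sin \<theta> = - sqrt (1 - q^2)" using q0 by (simp add: \<theta>_def sin_arccos)
  have s2: "\<rho> * sqrt (1 - q^2) = - y"
  proof -
    have "\<rho> * sqrt (1 - q^2) = sqrt (\<rho>^2 * (1 - q^2))" using \<rho>p by (simp add: real_sqrt_mult)
    also have "\<rho>^2 * (1 - q^2) = \<rho>^2 - x^2" using \<rho>p by (simp add: q_def power_divide field_simps)
    also have "\<dots> = y^2" using \<rho>sq by simp
    also have "sqrt (y^2) = - y" using y0 by simp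
    finally show ?thesis .
  qed
  have r1: "Re (of_real \<rho> * cis \<theta>) = x" using \<rho>p by (simp add: c q_def)
  have r2: "Im (of_real \<rho> * cis \<theta>) = y" using s2 by (simp add: s)
  have veq: "v = of_real \<rho> * cis \<theta>" using r1 r2 by (simp add: complex_eq_iff x_def y_def)
  have t1: "- pi/2 \<le> \<theta>" using arccos_le_pi2[OF q0] by (simp add: \<theta>_def)
  have t2: "\<theta> \<le> - pi/6"
  proof -
    have "sqrt 3 / 2 \<le> 1" using hh_bounds by (simp add: hh_def)
    hence "arccos (sqrt 3 / 2) \<le> arccos q" using q0 q32 by (intro arccos_le_arccos) auto
    moreover have "arccos (sqrt 3 / 2) = pi / 6"
    proof -
      have "arccos (cos (pi/6)) = pi/6" by (rule arccos_cos) auto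
      thus ?thesis by (simp only: cos_30)
    qed
    ultimately show ?thesis by (simp add: \<theta>_def)
  qed
  have "z = \<i> * of_real (B - A) + of_real \<rho> * cis \<theta>" using veq unfolding v_def by (metis diff_add_cancel add.commute)
  thus ?thesis unfolding bot_sector_def using \<rho>p t1 t2 by (intro CollectI exI[of _ \<rho>] exI[of _ \<theta>]) simp
qed

definition Gi :: "real \<Rightarrow> real \<Rightarrow> real \<Rightarrow> complex \<Rightarrow> complex" where
  "Gi A' B' B w = Complex (-1/2) (- hh) * (w - \<i> * of_real B) + \<i> * of_real (B' - A')"

lemma glue_re: "Re (glue_map A' B' B z) = - Re z / 2 - hh * (Im z - (B' - A'))"
  by (simp add: glue_eq)
lemma glue_im: "Im (glue_map A' B' B z) = hh * Re z - (Im z - (B' - A')) / 2 + B"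
  by (simp add: glue_eq)
lemma gi_re: "Re (Gi A' B' B w) = - Re w / 2 + hh * (Im w - B)"
  by (simp add: Gi_def)
lemma gi_im: "Im (Gi A' B' B w) = - hh * Re w - (Im w - B) / 2 + (B' - A')"
  by (simp add: Gi_def)

lemma glue_gi: "glue_map A' B' B (Gi A' B' B w) = w"
proof -
  have h: "hh * hh = 3/4" using hh_sq by (simp add: power2_eq_square)
  have "Re (glue_map A' B' B (Gi A' B' B w)) = Re w / 4 + (hh * hh) * Re w"
    by (simp add: glue_re gi_re gi_im field_simps)
  moreover have "Im (glue_map A' B' B (Gi A' B' B w)) = (hh * hh) * (Im w - B) + (Im w - B) / 4 + B"
    by (simp add: glue_im gi_re gi_im field_simps)
  ultimately show ?thesis by (simp add: complex_eq_iff h field_simps)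
qed

lemma cmod_glue_diff: "cmod (glue_map A' B' B z - glue_map A' B' B z') = cmod (z - z')"
proof -
  have "glue_map A' B' B z - glue_map A' B' B z' = cis (2*pi/3) * (z - z')"
    by (simp add: glue_map_def algebra_simps)
  thus ?thesis by (simp add: norm_mult)
qed

lemma hh_mul: assumes "0 \<le> p" shows "433/500 * p \<le> hh * p" "hh * p \<le> 8661/10000 * p"
  using mult_right_mono[OF less_imp_le[OF hh_bounds(1)] assms] mult_right_mono[OF less_imp_le[OF hh_bounds(2)] assms]
  by simp_all

lemma hh_abs: "\<bar>hh * B\<bar> \<le> 8661/10000 * \<bar>B\<bar>"
proof -
  have "\<bar>hh * B\<bar> = hh * \<bar>B\<bar>" using hh_bounds by (simp add: abs_mult)
  thus ?thesis using hh_mul[of "\<bar>B\<bar>"] by simp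
qed

lemma cmod_le_sum: "cmod w \<le> \<bar>Re w\<bar> + \<bar>Im w\<bar>" by (rule cmod_le)

lemma glue0: assumes "\<bar>A'\<bar> \<le> K" "\<bar>B'\<bar> \<le> K" "\<bar>B\<bar> \<le> K"
  shows "cmod (glue_map A' B' B 0) \<le> 3 * K"
proof -
  have "glue_map A' B' B 0 = cis (2*pi/3) * (- (\<i> * of_real (B' - A'))) + \<i> * of_real B"
    by (simp add: glue_map_def)
  hence "cmod (glue_map A' B' B 0) \<le> cmod (cis (2*pi/3) * (- (\<i> * of_real (B' - A')))) + cmod (\<i> * of_real B)"
    by (metis norm_triangle_ineq)
  also have "\<dots> = \<bar>B' - A'\<bar> + \<bar>B\<bar>" by (simp add: norm_mult flip: of_real_diff)
  finally show ?thesis using assms by linarith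
qed

lemma glue_far: assumes "\<bar>A'\<bar> \<le> K" "\<bar>B'\<bar> \<le> K" "\<bar>B\<bar> \<le> K"
  shows "cmod (glue_map A' B' B z) \<ge> cmod z - 3 * K" "cmod (glue_map A' B' B z) \<le> cmod z + 3 * K"
proof -
  have e: "cmod (glue_map A' B' B z - glue_map A' B' B 0) = cmod z"
    using cmod_glue_diff[of A' B' B z 0] by simp
  have "cmod z \<le> cmod (glue_map A' B' B z) + cmod (glue_map A' B' B 0)"
    using e norm_triangle_ineq4[of "glue_map A' B' B z" "glue_map A' B' B 0"] by linarith
  thus "cmod (glue_map A' B' B z) \<ge> cmod z - 3 * K" using glue0[OF assms] by linarith
  have "cmod (glue_map A' B' B z) \<le> cmod z + cmod (glue_map A' B' B 0)"
    using e norm_triangle_ineq2[of "glue_map A' B' B z" "glue_map A' B' B 0"] by linarith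
  thus "cmod (glue_map A' B' B z) \<le> cmod z + 3 * K" using glue0[OF assms] by linarith
qed

lemma up_geom:
  assumes K: "\<bar>A'\<bar> \<le> K" "\<bar>B'\<bar> \<le> K" "\<bar>B\<bar> \<le> K"
    and w: "Re w \<ge> 0" "Im w \<ge> 2 * Re w" "cmod w \<ge> 40 * (K + 1)"
  shows "botc A' B' (Gi A' B' B w)" "glue_map A' B' B (Gi A' B' B w) = w"
    "\<bar>Im (Gi A' B' B w)\<bar> < 2 * Re (Gi A' B' B w)"
    "cmod (Gi A' B' B w) \<ge> cmod w - 3 * K" "cmod (Gi A' B' B w) \<le> cmod w + 3 * K"
proof -
  define p where "p = Re w"
  define q where "q = Im w"
  have p0: "p \<ge> 0" and pq: "q \<ge> 2 * p" using w by (auto simp: p_def q_def)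
  have "cmod w \<le> \<bar>p\<bar> + \<bar>q\<bar>" using cmod_le_sum by (simp add: p_def q_def)
  hence qb: "q \<ge> 26 * K + 26" using w(3) p0 pq by (simp add: algebra_simps)
  have K0: "K \<ge> 0" using K by linarith
  note a = hh_mul[OF p0] hh_abs[of B]
  have "26 * K + 26 \<ge> 0" using K0 by simp
  hence q0: "q \<ge> 0" using qb by linarith
  note a2 = hh_mul[OF q0]
  have hm: "hh * (q - B) = hh * q - hh * B" by (simp add: algebra_simps)
  show "glue_map A' B' B (Gi A' B' B w) = w" by (rule glue_gi)
  have sq: "sqrt 3 = 2 * hh" by (simp add: hh_def)
  have hh2: "hh * hh = 3/4" using hh_sq by (simp add: power2_eq_square)
  define X where "X = Re (Gi A' B' B w)"
  define Y where "Y = Im (Gi A' B' B w)"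
  have Xe: "X = - p / 2 + hh * q - hh * B" by (simp add: X_def gi_re p_def q_def algebra_simps)
  have Ye: "Y = - (hh * p) - q / 2 + B / 2 + (B' - A')" by (simp add: Y_def gi_im p_def q_def field_simps)
  have im2: "sqrt 3 * (B' - A' - Y) = 3/2 * p + hh * q - hh * B"
  proof -
    have "sqrt 3 * (B' - A' - Y) = 2 * (hh * hh) * p + hh * q - hh * B"
      unfolding Ye sq by (simp add: field_simps)
    thus ?thesis unfolding hh2 by simp
  qed
  have hb: "- \<bar>hh * B\<bar> \<le> hh * B" "hh * B \<le> \<bar>hh * B\<bar>" by auto
  have kb: "- K \<le> A'" "A' \<le> K" "- K \<le> B'" "B' \<le> K" "- K \<le> B" "B \<le> K" using K by auto
  show "botc A' B' (Gi A' B' B w)"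
    unfolding botc_def X_def[symmetric] Y_def[symmetric] im2 using a a2 hb kb K K0 p0 pq qb Xe Ye
    by (intro conjI; linarith)
  show "\<bar>Im (Gi A' B' B w)\<bar> < 2 * Re (Gi A' B' B w)"
    unfolding X_def[symmetric] Y_def[symmetric] abs_less_iff using a a2 hb kb K K0 p0 pq qb Xe Ye
    by (intro conjI; linarith)
  have Gw: "w = glue_map A' B' B (Gi A' B' B w)" by (simp add: glue_gi)
  show "cmod (Gi A' B' B w) \<ge> cmod w - 3 * K" using glue_far(2)[OF K, of "Gi A' B' B w"] Gw by simp
  show "cmod (Gi A' B' B w) \<le> cmod w + 3 * K" using glue_far(1)[OF K, of "Gi A' B' B w"] Gw by simp
qed

lemma low_geom:
  assumes K: "\<bar>A'\<bar> \<le> K" "\<bar>B'\<bar> \<le> K" "\<bar>B\<bar> \<le> K"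
    and w: "Re w \<ge> 0" "Im w \<le> - 2 * Re w" "cmod w \<ge> 40 * (K + 1)"
  shows "botc A' B' w"
    "\<bar>Im (glue_map A' B' B w)\<bar> < 2 * Re (glue_map A' B' B w)"
    "cmod (glue_map A' B' B w) \<ge> cmod w - 3 * K" "cmod (glue_map A' B' B w) \<le> cmod w + 3 * K"
proof -
  define p where "p = Re w"
  define r where "r = - Im w"
  define D where "D = B' - A'"
  have p0: "p \<ge> 0" and pr: "r \<ge> 2 * p" using w by (auto simp: p_def r_def)
  have "cmod w \<le> \<bar>p\<bar> + \<bar>r\<bar>" using cmod_le_sum by (simp add: p_def r_def)
  hence rb: "r \<ge> 26 * K + 26" using w(3) p0 pr by (simp add: algebra_simps)
  have K0: "K \<ge> 0" using K by linarith
  have D2: "\<bar>D\<bar> \<le> 2 * K" using K by (simp add: D_def)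
  have "26 * K + 26 \<ge> 0" using K0 by simp
  hence r0: "r \<ge> 0" using rb by linarith
  note a = hh_mul[OF p0] hh_mul[OF r0] hh_abs[of D] hh_abs[of B]
  have hb: "- \<bar>hh * D\<bar> \<le> hh * D" "hh * D \<le> \<bar>hh * D\<bar>" by auto
  have kb: "- K \<le> A'" "A' \<le> K" "- K \<le> B'" "B' \<le> K" "- K \<le> B" "B \<le> K" "- 2 * K \<le> D" "D \<le> 2 * K"
    using K D2 by auto
  have sq: "sqrt 3 = 2 * hh" by (simp add: hh_def)
  have e3: "sqrt 3 * (B' - A' - Im w) = 2 * (hh * D) + 2 * (hh * r)"
    by (simp add: sq D_def r_def algebra_simps)
  have i1: "Im w = - r" and i2: "Re w = p" and i3: "B' - A' = D" by (simp_all add: r_def p_def D_def)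
  have b2: "Im w < B' - A'" unfolding i1 i3 using kb K0 rb by linarith
  have b3: "Re w \<le> sqrt 3 * (B' - A' - Im w)" unfolding e3 i2 using a hb kb K K0 p0 pr rb by linarith
  show "botc A' B' w" unfolding botc_def using b2 b3 p0 i2 by simp
  define X where "X = Re (glue_map A' B' B w)"
  define Y where "Y = Im (glue_map A' B' B w)"
  have Xe: "X = - p / 2 + hh * r + hh * D" by (simp add: X_def glue_re p_def r_def D_def algebra_simps)
  have Ye: "Y = hh * p + r / 2 + D / 2 + B" by (simp add: Y_def glue_im p_def r_def D_def field_simps)
  show "\<bar>Im (glue_map A' B' B w)\<bar> < 2 * Re (glue_map A' B' B w)"
  proof -
    have hD: "hh * D \<ge> - (17322/10000) * K" using hb(1) a(5) D2 by linarith
    have X2: "2 * X = - p + 2 * (hh * r) + 2 * (hh * D)" unfolding Xe by simp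
    have 1: "Y < 2 * X" unfolding X2 Ye using a(2) a(3) hD kb(6) kb(8) pr p0 rb K0 by linarith
    have 2: "- Y < 2 * X" unfolding X2 Ye using a(1) a(3) hD kb(5) kb(7) pr p0 rb K0 by linarith
    show ?thesis using 1 2 unfolding X_def Y_def by linarith
  qed
  show "cmod (glue_map A' B' B w) \<ge> cmod w - 3 * K" using glue_far(1)[OF K] .
  show "cmod (glue_map A' B' B w) \<le> cmod w + 3 * K" using glue_far(2)[OF K] .
qed

definition e0 :: complex where "e0 = Complex hh (-1/2)"

lemma norm_sub_e0: "(cmod (x - of_real t * e0))^2 = (cmod x)^2 - 2 * t * (hh * Re x - Im x / 2) + t^2"
proof -
  have h: "hh * hh = 3/4" using hh_sq by (simp add: power2_eq_square)
  have "(cmod (x - of_real t * e0))^2 = (Re x - t * hh)^2 + (Im x + t/2)^2"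
    by (simp add: cmod_power2 e0_def)
  also have "\<dots> = (Re x)^2 + (Im x)^2 - 2 * t * (hh * Re x - Im x / 2) + t^2 * (hh * hh + 1/4)"
    by (simp add: power2_eq_square field_simps)
  finally show ?thesis by (simp add: h cmod_power2)
qed

lemma inner_bound: "\<bar>hh * Re c - Im c / 2\<bar> \<le> 2 * cmod c"
proof -
  have "\<bar>hh * Re c\<bar> \<le> 8661/10000 * \<bar>Re c\<bar>" by (rule hh_abs)
  moreover have "\<bar>Re c\<bar> \<le> cmod c" "\<bar>Im c\<bar> \<le> cmod c" by (rule abs_Re_le_cmod, rule abs_Im_le_cmod)
  ultimately show ?thesis by linarith
qed

lemma side_up:
  assumes K: "\<bar>A'\<bar> \<le> K" "\<bar>B'\<bar> \<le> K" "\<bar>B\<bar> \<le> K" and ci: "cmod ci \<le> K"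
    and Gc: "glue_map A' B' B cj = ci + of_real t * e0" and t0: "t \<ge> 0"
    and w: "Re w \<ge> 0" "Im w = 2 * Re w" "cmod w \<ge> 100 * (K + 1)"
  shows "cmod (w - ci) \<le> cmod (Gi A' B' B w - cj)"
proof -
  define p where "p = Re w"
  have p0: "p \<ge> 0" using w by (simp add: p_def)
  have "cmod w \<le> \<bar>Re w\<bar> + \<bar>Im w\<bar>" by (rule cmod_le_sum)
  hence pb: "3 * p \<ge> 100 * K + 100" using w p0 by (simp add: p_def algebra_simps)
  have K0: "K \<ge> 0" using K by linarith
  have e: "cmod (Gi A' B' B w - cj) = cmod (w - ci - of_real t * e0)"
    using cmod_glue_diff[of A' B' B "Gi A' B' B w" cj] by (simp add: glue_gi Gc algebra_simps)
  define x where "x = w - ci"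
  have ix: "hh * Re x - Im x / 2 = (hh * p - p) - (hh * Re ci - Im ci / 2)"
    by (simp add: x_def p_def w(2) field_simps)
  have "hh * Re x - Im x / 2 \<le> 0"
    unfolding ix using hh_mul(2)[OF p0] inner_bound[of ci] ci pb K0 by linarith
  hence "t * (hh * Re x - Im x / 2) \<le> 0" using t0 by (simp add: mult_nonneg_nonpos)
  moreover have "t^2 \<ge> 0" by simp
  ultimately have "(cmod x)^2 \<le> (cmod (x - of_real t * e0))^2" unfolding norm_sub_e0 by linarith
  hence "cmod x \<le> cmod (x - of_real t * e0)" by (rule power2_le_imp_le) simp
  thus ?thesis using e by (simp add: x_def)
qed

lemma side_low:
  assumes K: "\<bar>A'\<bar> \<le> K" "\<bar>B'\<bar> \<le> K" "\<bar>B\<bar> \<le> K" and cp: "cmod cp \<le> K"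
    and Gc: "glue_map A' B' B ci = cp + of_real t * e0" and t0: "t \<ge> 0" "t \<le> K"
    and w: "Re w \<ge> 0" "Im w = - 2 * Re w" "cmod w \<ge> 100 * (K + 1)"
  shows "cmod (w - ci) \<le> cmod (glue_map A' B' B w - cp)"
proof -
  define p where "p = Re w"
  define D where "D = B' - A'"
  have p0: "p \<ge> 0" using w by (simp add: p_def)
  have "cmod w \<le> \<bar>Re w\<bar> + \<bar>Im w\<bar>" by (rule cmod_le_sum)
  hence pb: "3 * p \<ge> 100 * K + 100" using w p0 by (simp add: p_def algebra_simps)
  have K0: "K \<ge> 0" using K by linarith
  have D2: "\<bar>D\<bar> \<le> 2 * K" using K by (simp add: D_def)
  have h: "hh * hh = 3/4" using hh_sq by (simp add: power2_eq_square)
  have e: "cmod (w - ci) = cmod (glue_map A' B' B w - cp - of_real t * e0)"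
    using cmod_glue_diff[of A' B' B w ci] by (simp add: Gc algebra_simps)
  define z where "z = glue_map A' B' B w"
  define x where "x = z - cp"
  have iw: "Im w = - 2 * p" using w(2) by (simp add: p_def)
  have "Re z = - p / 2 - hh * (Im w - D)" by (simp add: z_def glue_re D_def p_def)
  also have "\<dots> = - p / 2 + hh * (2 * p) + hh * D" unfolding iw by (simp add: algebra_simps)
  finally have rz: "Re z = - p / 2 + hh * (2 * p) + hh * D" .
  have iz: "Im z = hh * p + p + D / 2 + B" by (simp add: z_def glue_im p_def D_def w(2) field_simps)
  have "hh * Re z - Im z / 2 = (2 * (hh * hh) - hh / 2) * p + (hh * hh) * D - (hh * p + p + D / 2 + B) / 2"
    unfolding rz iz by (simp add: algebra_simps)
  also have "\<dots> = (1 - hh) * p + D / 2 - B / 2" unfolding h by (simp add: field_simps)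
  finally have iz2: "hh * Re z - Im z / 2 = (1 - hh) * p + D / 2 - B / 2" .
  have ix: "hh * Re x - Im x / 2 = (p - hh * p) + D / 2 - B / 2 - (hh * Re cp - Im cp / 2)"
  proof -
    have "hh * Re x - Im x / 2 = (hh * Re z - Im z / 2) - (hh * Re cp - Im cp / 2)"
      by (simp add: x_def field_simps)
    thus ?thesis unfolding iz2 by (simp add: algebra_simps)
  qed
  have "hh * Re x - Im x / 2 \<ge> t / 2"
    unfolding ix using hh_mul(2)[OF p0] inner_bound[of cp] cp pb K0 D2 K(3) t0 by linarith
  hence "t * (t / 2) \<le> t * (hh * Re x - Im x / 2)" using t0 by (intro mult_left_mono) auto
  moreover have "t^2 = 2 * (t * (t / 2))" by (simp add: power2_eq_square)
  ultimately have "(cmod (x - of_real t * e0))^2 \<le> (cmod x)^2" unfolding norm_sub_e0 by linarith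
  hence "cmod (x - of_real t * e0) \<le> cmod x" by (rule power2_le_imp_le) simp
  thus ?thesis using e by (simp add: x_def z_def)
qed

definition om :: complex where "om = Complex (-1/2) hh"
definition omc :: complex where "omc = Complex (-1/2) (- hh)"

lemma hh2': "hh * hh = 3/4" using hh_sq by (simp add: power2_eq_square)

lemma om_omc: "om * omc = 1" by (simp add: om_def omc_def complex_eq_iff hh2')
lemma omc3: "omc ^ 3 = 1"
proof -
  have "omc ^ 3 = omc * omc * omc" by (simp add: power3_eq_cube)
  also have "\<dots> = 1" by (simp add: omc_def complex_eq_iff hh2' field_simps)
  finally show ?thesis .
qed
lemma omc1: "omc \<noteq> 1" by (simp add: omc_def complex_eq_iff)
lemma omc2: "omc ^ 2 \<noteq> 1"
proof -
  have "omc ^ 2 = Complex (-1/2) hh" by (simp add: power2_eq_square omc_def complex_eq_iff hh2' field_simps)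
  thus ?thesis by (simp add: complex_eq_iff)
qed
lemma omc2_e0: "omc ^ 2 * e0 = \<i>"
proof -
  have "omc ^ 2 = Complex (-1/2) hh" by (simp add: power2_eq_square omc_def complex_eq_iff hh2' field_simps)
  thus ?thesis by (simp add: e0_def complex_eq_iff hh2' field_simps)
qed
lemma omc_e0: "omc * e0 = Complex (- hh) (-1/2)"
  by (simp add: e0_def omc_def complex_eq_iff hh2' field_simps)

lemma glue_lin: "glue_map A' B' B z = om * z + glue_map A' B' B 0"
  by (simp add: glue_eq om_def algebra_simps)

primrec SS :: "(nat \<Rightarrow> real) \<Rightarrow> (nat \<Rightarrow> complex) \<Rightarrow> nat \<Rightarrow> complex" where
  "SS t \<gamma> 0 = 0"
| "SS t \<gamma> (Suc i) = omc * (SS t \<gamma> i + of_real (t i) * e0 - \<gamma> i)"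

primrec CC :: "(nat \<Rightarrow> real) \<Rightarrow> (nat \<Rightarrow> complex) \<Rightarrow> complex \<Rightarrow> nat \<Rightarrow> complex" where
  "CC t \<gamma> c0 0 = c0"
| "CC t \<gamma> c0 (Suc i) = omc * (CC t \<gamma> c0 i + of_real (t i) * e0 - \<gamma> i)"

lemma CC_closed: "CC t \<gamma> c0 i = omc ^ i * c0 + SS t \<gamma> i"
  by (induction i) (simp_all add: algebra_simps)

primrec LL :: "(nat \<Rightarrow> real) \<Rightarrow> nat \<Rightarrow> complex" where
  "LL t 0 = 0"
| "LL t (Suc i) = omc * (LL t i + of_real (t i) * e0)"

lemma SS_lin: "SS t \<gamma> i = SS (\<lambda>_. 0) \<gamma> i + LL t i"
  by (induction i) (simp_all add: algebra_simps)

lemma LL_tail: assumes "\<And>k. k \<ge> 3 \<Longrightarrow> t k = 0" shows "i \<ge> 3 \<Longrightarrow> LL t i = omc ^ (i - 3) * LL t 3"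
proof (induction i)
  case 0 thus ?case by simp
next
  case (Suc i)
  show ?case
  proof (cases "i \<ge> 3")
    case True
    have "LL t (Suc i) = omc * LL t i" using assms[OF True] by simp
    also have "\<dots> = omc * (omc ^ (i - 3) * LL t 3)" using Suc True by simp
    also have "\<dots> = omc ^ (Suc i - 3) * LL t 3"
    proof -
      have "Suc i - 3 = Suc (i - 3)" using True by simp
      thus ?thesis by (simp only: power_Suc mult.assoc)
    qed
    finally show ?thesis .
  next
    case False
    hence "Suc i = 3" using Suc by simp
    thus ?thesis by simp
  qed
qed

lemma solve_cone: "\<exists>t0 t1 t2. t0 \<ge> 0 \<and> t1 \<ge> 0 \<and> t2 \<ge> 0 \<and>
   of_real t0 * e0 + of_real t1 * \<i> + of_real t2 * Complex (- hh) (-1/2) = \<tau>"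
proof -
  define X where "X = Re \<tau>"
  define Y where "Y = Im \<tau>"
  define A where "A = X / hh"
  define t2 where "t2 = 2 * \<bar>X\<bar> + \<bar>Y\<bar>"
  define t0 where "t0 = t2 + A"
  define t1 where "t1 = Y + 2 * \<bar>X\<bar> + \<bar>Y\<bar> + A / 2"
  have hp: "hh > 1/2" using hh_bounds by simp
  have hA: "hh * A = X" using hp by (simp add: A_def)
  have q2: "- (2 * \<bar>X\<bar>) \<le> A"
  proof (cases "X \<ge> 0")
    case True
    hence "A \<ge> 0" using hp by (simp add: A_def)
    thus ?thesis by simp
  next
    case False
    hence "- X / hh \<le> - X / (1/2)" using hp by (intro divide_left_mono) auto
    hence "- A \<le> - 2 * X" by (simp add: A_def)
    thus ?thesis using False by simp
  qed
  have y2: "- \<bar>Y\<bar> \<le> Y" by simp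
  have ax: "\<bar>X\<bar> \<ge> 0" "\<bar>Y\<bar> \<ge> 0" by simp_all
  have p0: "t0 \<ge> 0" unfolding t0_def t2_def using q2 ax by linarith
  have p1: "t1 \<ge> 0" unfolding t1_def using q2 y2 ax by linarith
  have p2: "t2 \<ge> 0" by (simp add: t2_def)
  define Z where "Z = of_real t0 * e0 + of_real t1 * \<i> + of_real t2 * Complex (- hh) (-1/2)"
  have r: "Re Z = hh * t0 - hh * t2" by (simp add: Z_def e0_def)
  have i: "Im Z = - t0 / 2 + t1 - t2 / 2" by (simp add: Z_def e0_def)
  have r2: "Re Z = X" unfolding r t0_def using hA by (simp add: algebra_simps)
  have i2: "Im Z = Y" unfolding i t1_def t0_def t2_def by (simp add: field_simps)
  have "Z = \<tau>" using r2 i2 by (simp add: complex_eq_iff X_def Y_def)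
  thus ?thesis using p0 p1 p2 unfolding Z_def by blast
qed

lemma centers_exist:
  fixes n :: nat and \<gamma> :: "nat \<Rightarrow> complex"
  assumes n1: "n \<ge> 1"
  shows "\<exists>c t. \<forall>i<n. t i \<ge> 0 \<and> om * c (Suc i mod n) + \<gamma> i = c i + of_real (t i) * e0"
proof -
  have key: "\<exists>t c0. (\<forall>i. t i \<ge> 0) \<and> CC t \<gamma> c0 n = c0"
  proof (cases "omc ^ n = 1")
    case False
    define c0 where "c0 = SS (\<lambda>_. 0) \<gamma> n / (1 - omc ^ n)"
    have "CC (\<lambda>_. 0) \<gamma> c0 n = c0"
    proof -
      have nz: "1 - omc ^ n \<noteq> 0" using False by simp
      have "omc ^ n * c0 + SS (\<lambda>_. 0) \<gamma> n = c0"
        unfolding c0_def using nz by (simp add: divide_simps algebra_simps)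
      thus ?thesis unfolding CC_closed .
    qed
    thus ?thesis by (intro exI[of _ "\<lambda>_. 0"] exI[of _ c0]) simp
  next
    case True
    have n3: "n \<ge> 3"
    proof (rule ccontr)
      assume "\<not> n \<ge> 3"
      hence "n = 1 \<or> n = 2" using n1 by auto
      thus False
      proof
        assume "n = 1" thus False using True omc1 by simp
      next
        assume "n = 2" thus False using True omc2 by simp
      qed
    qed
    obtain t0 t1 t2 where tt: "t0 \<ge> 0" "t1 \<ge> 0" "t2 \<ge> 0"
      "of_real t0 * e0 + of_real t1 * \<i> + of_real t2 * Complex (- hh) (-1/2) = - SS (\<lambda>_. 0) \<gamma> n"
      using solve_cone by blast
    define t where "t = (\<lambda>k::nat. if k = 0 then t0 else if k = 1 then t1 else if k = 2 then t2 else 0)"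
    have t0k: "\<And>k. k \<ge> 3 \<Longrightarrow> t k = 0" by (simp add: t_def)
    have tpos: "\<forall>i. t i \<ge> 0" unfolding t_def using tt by (simp split: if_split)
    have L3: "LL t 3 = omc ^ 3 * (of_real t0 * e0) + of_real t1 * (omc ^ 2 * e0) + of_real t2 * (omc * e0)"
      by (simp add: t_def numeral_3_eq_3 power2_eq_square power3_eq_cube algebra_simps)
    have L3': "LL t 3 = - SS (\<lambda>_. 0) \<gamma> n"
      unfolding L3 omc3 omc2_e0 omc_e0 using tt(4) by simp
    have on3: "omc ^ (n - 3) = 1"
    proof -
      have "omc ^ n = omc ^ ((n - 3) + 3)" using n3 by simp
      also have "\<dots> = omc ^ (n - 3) * omc ^ 3" by (rule power_add)
      finally have "omc ^ n = omc ^ (n - 3) * omc ^ 3" .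
      thus ?thesis using True omc3 by simp
    qed
    have "CC t \<gamma> 0 n = 0"
    proof -
      have Ln: "LL t n = - SS (\<lambda>_. 0) \<gamma> n" using LL_tail[OF t0k n3] on3 L3' by simp
      show ?thesis unfolding CC_closed SS_lin[of t \<gamma> n] Ln by simp
    qed
    thus ?thesis using tpos by blast
  qed
  then obtain t c0 where tp: "\<forall>i. t i \<ge> 0" and cn: "CC t \<gamma> c0 n = c0" by blast
  define c where "c = CC t \<gamma> c0"
  have "t i \<ge> 0 \<and> om * c (Suc i mod n) + \<gamma> i = c i + of_real (t i) * e0" if "i < n" for i
  proof -
    have cs: "c (Suc i mod n) = c (Suc i)"
    proof (cases "Suc i = n")
      case True thus ?thesis using cn by (simp add: c_def)
    next
      case False thus ?thesis using that by simp
    qed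
    have "om * c (Suc i) + \<gamma> i = (om * omc) * (c i + of_real (t i) * e0 - \<gamma> i) + \<gamma> i"
      by (simp add: c_def mult.assoc)
    also have "\<dots> = c i + of_real (t i) * e0" by (simp add: om_omc)
    finally show ?thesis using tp cs by simp
  qed
  thus ?thesis by blast
qed

lemma kk_bounds: "2 \<le> kk" "kk \<le> 5/2"
proof -
  have "2 \<le> sqrt 6" using real_le_rsqrt[of 2 6] by simp
  thus "2 \<le> kk" by (simp add: kk_def)
  have "sqrt 6 \<le> sqrt ((5/2)^2)" by (simp add: power2_eq_square)
  thus "kk \<le> 5/2" by (simp add: kk_def)
qed

lemma fd_pos: "r > 0 \<Longrightarrow> fd r > 0" by (simp add: fd_def)
lemma fd_nonneg: "r \<ge> 0 \<Longrightarrow> fd r \<ge> 0" by (simp add: fd_def)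

lemma fd_decr: assumes "1 \<le> x" "x \<le> y" shows "fd y \<le> fd x"
proof -
  define d where "d = y - x"
  have d0: "d \<ge> 0" using assms by (simp add: d_def)
  have "y \<le> x * (1 + d)^2"
  proof -
    have yd: "y = x + d" by (simp add: d_def)
    have "x * (1 + d)^2 = x + 2 * (x * d) + x * d^2" by (simp add: power2_eq_square algebra_simps)
    moreover have "x * d \<ge> d" using assms d0 mult_right_mono[of 1 x d] by simp
    moreover have "x * d^2 \<ge> 0" using assms by simp
    ultimately show ?thesis unfolding yd using d0 by linarith
  qed
  hence "sqrt y \<le> sqrt (x * (1 + d)^2)" by (rule real_sqrt_le_mono)
  also have "\<dots> = sqrt x * (1 + d)" using d0 by (simp add: real_sqrt_mult)
  also have "\<dots> \<le> sqrt x * exp d" using exp_ge_add_one_self[of d] assms by (intro mult_left_mono) auto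
  also have "\<dots> \<le> sqrt x * exp (kk * d)"
  proof -
    have "d \<le> kk * d" using kk_bounds d0 by (simp add: mult_right_mono[of 1 kk d, simplified])
    thus ?thesis using assms by (intro mult_left_mono) auto
  qed
  finally have A: "sqrt y \<le> sqrt x * exp (kk * d)" .
  have "fd y = sqrt y * exp (- kk * y)" by (simp add: fd_def)
  also have "\<dots> \<le> sqrt x * exp (kk * d) * exp (- kk * y)" using A by (intro mult_right_mono) auto
  also have "\<dots> = sqrt x * exp (- kk * x)"
  proof -
    have "exp (kk * d) * exp (- kk * y) = exp (- kk * x)" by (simp add: d_def algebra_simps flip: exp_add)
    thus ?thesis by (simp add: mult.assoc)
  qed
  finally show ?thesis by (simp add: fd_def)
qed

lemma fd_cont: "continuous_on A (\<lambda>w. fd (cmod (w - c)))"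
  unfolding fd_def by (intro continuous_intros)

lemma final_ineq:
  fixes U B d :: real
  assumes d1: "d \<ge> 1" and U0: "U \<ge> 0" and Ud: "U \<le> 1 / d" and BU: "B < U" and B0: "B \<ge> 0"
    and lap: "FF U \<le> B * (6 - 2 * kk / d + 1 / (4 * d^2))"
  shows False
proof -
  define Q where "Q = 6 - 2 * kk / d + 1 / (4 * d^2)"
  have dp: "d > 0" using d1 by simp
  have a1: "2 * kk / d \<le> 5" using kk_bounds d1 dp by (simp add: divide_simps)
  have a2: "1 / (4 * d^2) \<ge> 0" by simp
  have Qp: "Q > 0" unfolding Q_def using a1 a2 by linarith
  have b1: "2 * kk / d \<ge> 4 * (1 / d)" using kk_bounds dp by (simp add: divide_simps)
  have b2: "1 / (4 * d^2) \<le> 1 / d"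
  proof -
    have "d \<le> 4 * d^2" using d1 by (simp add: power2_eq_square)
    thus ?thesis using dp by (simp add: frac_le)
  qed
  have b3: "3 * U \<le> 3 * (1 / d)" using Ud by simp
  have QU: "Q \<le> 6 - 3 * U" unfolding Q_def using b1 b2 b3 by linarith
  have "FF U \<le> B * Q" using lap by (simp add: Q_def)
  also have "\<dots> < U * Q" using BU Qp by simp
  also have "\<dots> \<le> U * (6 - 3 * U)" using QU U0 by (simp add: mult_left_mono)
  also have "\<dots> = 6 * U - 3 * U^2" by (simp add: power2_eq_square algebra_simps)
  also have "\<dots> \<le> FF U" by (rule FF_lower[OF U0])
  finally show False by simp
qed

definition sect :: "complex \<Rightarrow> bool" where "sect w \<longleftrightarrow> \<bar>Im w\<bar> \<le> 2 * Re w"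

lemma finite_argmax_nat:
  fixes f :: "nat \<Rightarrow> real"
  assumes "n \<ge> 1" shows "\<exists>i<n. \<forall>k<n. f k \<le> f i"
proof -
  have fin: "finite (f ` {..<n})" by simp
  have "0 \<in> {..<n}" using assms by simp
  hence ne: "f ` {..<n} \<noteq> {}" by blast
  obtain i where i: "i < n" "f i = Max (f ` {..<n})" using Max_in[OF fin ne] by auto
  have "\<forall>k<n. f k \<le> f i" using Max_ge[OF fin] i by auto
  thus ?thesis using i by blast
qed

lemma sect_closed: "closed {w. sect w}"
proof -
  have "closed {w. \<bar>Im w\<bar> \<le> 2 * Re w}"
    by (intro closed_Collect_le continuous_intros)
  thus ?thesis by (simp add: sect_def)
qed

lemma chp_closed: "closed closed_half_plane"
  unfolding closed_half_plane_def using closed_halfspace_Re_ge[of 0] by simp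

lemma sect_chp: "sect w \<Longrightarrow> w \<in> closed_half_plane"
  by (simp add: sect_def closed_half_plane_def)

lemma cmod_sect: "sect w \<Longrightarrow> cmod w \<le> 3 * Re w"
proof -
  assume s: "sect w"
  have "cmod w \<le> \<bar>Re w\<bar> + \<bar>Im w\<bar>" by (rule cmod_le)
  thus ?thesis using s by (simp add: sect_def)
qed

lemma max_argument:
  fixes n :: nat and u :: "nat \<Rightarrow> complex \<Rightarrow> real" and c :: "nat \<Rightarrow> complex" and S :: "nat \<Rightarrow> complex set"
    and J P :: "nat \<Rightarrow> nat" and K Rzero Cone :: real
  assumes n1: "n \<ge> 1"
    and sm: "\<And>i. i < n \<Longrightarrow> smooth_on (S i) (u i)" and hS: "\<And>i. i < n \<Longrightarrow> closed_half_plane \<subseteq> S i"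
    and lap: "\<And>i w. i < n \<Longrightarrow> w \<in> closed_half_plane \<Longrightarrow> laplacian (u i) w = FF (u i w)"
    and nn: "\<And>i w. i < n \<Longrightarrow> w \<in> closed_half_plane \<Longrightarrow> u i w \<ge> 0"
    and dec: "\<And>i w. i < n \<Longrightarrow> sect w \<Longrightarrow> cmod w \<ge> Rzero \<Longrightarrow> u i w \<le> Cone / (cmod w)^2"
    and cK: "\<And>i. i < n \<Longrightarrow> cmod (c i) \<le> K"
    and K0: "K \<ge> 0" and Rzero0: "Rzero \<ge> 0" and Cone0: "Cone \<ge> 0"
    and up: "\<And>i w. i < n \<Longrightarrow> Re w \<ge> 0 \<Longrightarrow> Im w = 2 * Re w \<Longrightarrow> cmod w \<ge> Rzero \<Longrightarrow>
       J i < n \<and> (\<exists>z. u (J i) z = u i w \<and> \<bar>Im z\<bar> < 2 * Re z \<and> cmod z \<ge> cmod w - K \<and>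
            cmod (w - c i) \<le> cmod (z - c (J i)))"
    and low: "\<And>i w. i < n \<Longrightarrow> Re w \<ge> 0 \<Longrightarrow> Im w = - 2 * Re w \<Longrightarrow> cmod w \<ge> Rzero \<Longrightarrow>
       P i < n \<and> (\<exists>z. u (P i) z = u i w \<and> \<bar>Im z\<bar> < 2 * Re z \<and> cmod z \<ge> cmod w - K \<and>
            cmod (w - c i) \<le> cmod (z - c (P i)))"
  shows "\<exists>Lm R. Lm \<ge> 0 \<and> R > 0 \<and> (\<forall>i<n. \<forall>w. sect w \<longrightarrow> cmod w \<ge> R \<longrightarrow> u i w \<le> Lm * fd (cmod (w - c i)))"
proof -
  define R where "R = Rzero + 2 * Cone + 2 * K + 2"
  have Rp: "R > 0" "R \<ge> Rzero + K + 2" "R \<ge> 2 * Cone + K + 2" "R \<ge> K + 2" "R \<ge> 2 * Cone" "R \<ge> Rzero"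
    using K0 Rzero0 Cone0 by (auto simp: R_def)
  have uc: "continuous_on (S i) (u i)" if "i < n" for i
    using sm[OF that] unfolding smooth_on_def by (metis iter_partial_simps(1))
  define Cin where "Cin = closed_half_plane \<inter> cball 0 (R + 2 * K)"
  have Cc: "compact Cin" unfolding Cin_def by (intro closed_Int_compact chp_closed compact_cball)
  have C0: "0 \<in> Cin" using Rp K0 by (simp add: Cin_def closed_half_plane_def)
  have "\<exists>M. \<forall>w\<in>Cin. u i w \<le> M" if "i < n" for i
  proof -
    have "Cin \<subseteq> S i" using hS[OF that] by (auto simp: Cin_def)
    hence "continuous_on Cin (u i)" by (rule continuous_on_subset[OF uc[OF that]])
    from continuous_attains_sup[OF Cc _ this] C0 obtain z where "\<forall>y\<in>Cin. u i y \<le> u i z" by blast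
    thus ?thesis by blast
  qed
  then obtain Mf where Mf: "\<And>i w. i < n \<Longrightarrow> w \<in> Cin \<Longrightarrow> u i w \<le> Mf i" by metis
  define M where "M = (\<Sum>i<n. \<bar>Mf i\<bar>)"
  have Mb: "u i w \<le> M" if "i < n" "w \<in> Cin" for i w
  proof -
    have "\<bar>Mf i\<bar> \<le> M" unfolding M_def using that(1) by (intro member_le_sum) auto
    thus ?thesis using Mf[OF that] by linarith
  qed
  have M0: "M \<ge> 0" unfolding M_def by (intro sum_nonneg) auto
  define F0 where "F0 = fd (R + 3 * K)"
  have F0p: "F0 > 0" unfolding F0_def using Rp K0 by (intro fd_pos) linarith
  define Lm where "Lm = M / F0"
  have l0: "Lm \<ge> 0" using M0 F0p by (simp add: Lm_def)
  have dist1: "cmod (w - c i) \<ge> cmod w - K" if "i < n" for i w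
    using norm_triangle_ineq2[of w "c i"] cK[OF that] by linarith
  have dist2: "cmod (w - c i) \<le> cmod w + K" if "i < n" for i w
    using norm_triangle_ineq4[of w "c i"] cK[OF that] by linarith
  have inner: "u i w \<le> Lm * fd (cmod (w - c i))"
    if "i < n" "sect w" "R \<le> cmod w" "cmod w \<le> R + 2 * K" for i w
  proof -
    have wC: "w \<in> Cin" using that by (simp add: Cin_def sect_chp)
    have "1 \<le> cmod (w - c i)" using dist1[OF that(1), of w] that Rp by linarith
    moreover have "cmod (w - c i) \<le> R + 3 * K" using dist2[OF that(1), of w] that by linarith
    ultimately have "F0 \<le> fd (cmod (w - c i))" unfolding F0_def by (rule fd_decr)
    hence "Lm * F0 \<le> Lm * fd (cmod (w - c i))" using l0 by (rule mult_left_mono)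
    moreover have "Lm * F0 = M" using F0p by (simp add: Lm_def)
    ultimately show ?thesis using Mb[OF that(1) wC] by linarith
  qed
  define \<Phi> where "\<Phi> = (\<lambda>i w. u i w - Lm * fd (cmod (w - c i)))"
  have main: "u i w \<le> Lm * fd (cmod (w - c i))" if "i < n" "sect w" "cmod w \<ge> R" for i w
  proof (rule ccontr)
    assume "\<not> u i w \<le> Lm * fd (cmod (w - c i))"
    hence \<eta>p: "\<Phi> i w > 0" by (simp add: \<Phi>_def)
    define \<eta> where "\<eta> = \<Phi> i w"
    have \<eta>0: "\<eta> > 0" using \<eta>p by (simp add: \<eta>_def)
    define R' where "R' = cmod w + K + sqrt (Cone / \<eta>) + 1"
    have sq0: "sqrt (Cone / \<eta>) \<ge> 0" using Cone0 \<eta>0 by simp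
    have \<Phi>le: "\<Phi> j z \<le> u j z" for j z
    proof -
      have "fd (cmod (z - c j)) \<ge> 0" by (rule fd_nonneg) simp
      thus ?thesis using l0 by (simp add: \<Phi>_def)
    qed
    have small: "u j z < \<eta>" if "j < n" "sect z" "cmod z \<ge> R' - K" for j z
    proof -
      have zR0: "cmod z \<ge> Rzero" using that(3) Rp \<open>cmod w \<ge> R\<close> sq0 unfolding R'_def by linarith
      have zs: "cmod z > sqrt (Cone / \<eta>)" using that(3) K0 norm_ge_zero[of w] unfolding R'_def by linarith
      have "(sqrt (Cone / \<eta>))^2 < (cmod z)^2" using zs sq0 by (intro power_strict_mono) auto
      hence "Cone / \<eta> < (cmod z)^2" using Cone0 \<eta>0 by simp
      hence "Cone < \<eta> * (cmod z)^2" using \<eta>0 by (simp add: divide_less_eq mult.commute)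
      moreover have "(cmod z)^2 > 0" using zs sq0 by (intro zero_less_power) linarith
      ultimately have "Cone / (cmod z)^2 < \<eta>" by (simp add: divide_less_eq)
      thus ?thesis using dec[OF that(1) that(2) zR0] by linarith
    qed
    define Ks where "Ks = ({w. sect w} \<inter> {w. R \<le> cmod w}) \<inter> cball 0 R'"
    have Ksc: "compact Ks" unfolding Ks_def
    proof (intro closed_Int_compact closed_Int compact_cball sect_closed)
      show "closed {w. R \<le> cmod w}" by (intro closed_Collect_le continuous_intros)
    qed
    have "cmod w \<le> R'" using K0 sq0 unfolding R'_def by linarith
    hence wK: "w \<in> Ks" using that by (simp add: Ks_def)
    have KsH: "z \<in> closed_half_plane" if "z \<in> Ks" for z using that by (simp add: Ks_def sect_chp)
    have contPhi: "continuous_on Ks (\<Phi> j)" if "j < n" for j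
    proof -
      have "Ks \<subseteq> S j" using hS[OF that] KsH by auto
      hence "continuous_on Ks (u j)" by (rule continuous_on_subset[OF uc[OF that]])
      thus ?thesis unfolding \<Phi>_def by (intro continuous_intros fd_cont)
    qed
    have "\<exists>p. p \<in> Ks \<and> (\<forall>y\<in>Ks. \<Phi> j y \<le> \<Phi> j p)" if "j < n" for j
      using continuous_attains_sup[OF Ksc _ contPhi[OF that]] wK by blast
    then obtain pp where pp: "\<And>j. j < n \<Longrightarrow> pp j \<in> Ks" "\<And>j y. j < n \<Longrightarrow> y \<in> Ks \<Longrightarrow> \<Phi> j y \<le> \<Phi> j (pp j)"
      by metis
    obtain i1 where i1: "i1 < n" "\<And>k. k < n \<Longrightarrow> \<Phi> k (pp k) \<le> \<Phi> i1 (pp i1)"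
      using finite_argmax_nat[OF n1, of "\<lambda>k. \<Phi> k (pp k)"] by blast
    define Mx where "Mx = \<Phi> i1 (pp i1)"
    have allle: "\<Phi> j z \<le> Mx" if "j < n" "z \<in> Ks" for j z
      using pp(2)[OF that] i1(2)[OF that(1)] by (simp add: Mx_def)
    have Mxeta: "Mx \<ge> \<eta>" using allle[OF \<open>i < n\<close> wK] by (simp add: \<eta>_def)
    define p where "p = pp i1"
    have pK: "p \<in> Ks" using pp(1)[OF i1(1)] by (simp add: p_def)
    have ps: "sect p" "R \<le> cmod p" "cmod p \<le> R'" using pK by (auto simp: Ks_def)
    have pbig: "cmod p > R + 2 * K"
    proof (rule ccontr)
      assume "\<not> cmod p > R + 2 * K"
      hence "\<Phi> i1 p \<le> 0" using inner[OF i1(1) ps(1) ps(2)] by (simp add: \<Phi>_def)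
      thus False using Mxeta \<eta>0 by (simp add: Mx_def p_def)
    qed
    have tr: "j < n \<and> z \<in> Ks \<and> \<bar>Im z\<bar> < 2 * Re z \<and> R < cmod z \<and> cmod z < R' \<and> \<Phi> j z \<ge> Mx"
      if j: "j < n" and z: "\<bar>Im z\<bar> < 2 * Re z" "cmod z \<ge> cmod p - K" "\<Phi> j z \<ge> Mx" for j z
    proof -
      have sz: "sect z" using z(1) by (simp add: sect_def)
      have zR: "R < cmod z" using z(2) pbig K0 by linarith
      have zR': "cmod z < R'"
      proof (rule ccontr)
        assume "\<not> cmod z < R'"
        hence "u j z < \<eta>" using small[OF j sz] K0 by simp
        thus False using \<Phi>le[of j z] z(3) Mxeta by linarith
      qed
      have "z \<in> Ks" using sz zR zR' by (simp add: Ks_def)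
      thus ?thesis using j z zR zR' by simp
    qed
    have p1: "cmod (p - c i1) \<ge> 1" using dist1[OF i1(1), of p] pbig Rp K0 by linarith
    have pR0: "cmod p \<ge> Rzero" using ps Rp K0 by linarith
    have Re0: "Re p \<ge> 0" using ps(1) by (simp add: sect_def)
    obtain j \<zeta> where jz: "j < n" "\<zeta> \<in> Ks" "\<bar>Im \<zeta>\<bar> < 2 * Re \<zeta>" "R < cmod \<zeta>" "cmod \<zeta> < R'" "\<Phi> j \<zeta> \<ge> Mx"
    proof -
      have MxP: "\<Phi> i1 p = Mx" by (simp add: Mx_def p_def)
      consider "\<bar>Im p\<bar> < 2 * Re p" | "Im p = 2 * Re p" | "Im p = - 2 * Re p"
      proof -
        have a: "\<bar>Im p\<bar> \<le> 2 * Re p" using ps(1) by (simp add: sect_def)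
        show ?thesis
        proof (cases "\<bar>Im p\<bar> < 2 * Re p")
          case True thus ?thesis using that by blast
        next
          case False
          hence e: "\<bar>Im p\<bar> = 2 * Re p" using a by linarith
          show ?thesis
          proof (cases "Im p \<ge> 0")
            case True thus ?thesis using e that by simp
          next
            case False thus ?thesis using e that by simp
          qed
        qed
      qed
      thus ?thesis
      proof cases
        case 1
        have "cmod p \<ge> cmod p - K" using K0 by simp
        thus ?thesis using tr[OF i1(1) 1] MxP that by auto
      next
        case 2
        obtain z where z: "J i1 < n" "u (J i1) z = u i1 p" "\<bar>Im z\<bar> < 2 * Re z" "cmod z \<ge> cmod p - K"
          "cmod (p - c i1) \<le> cmod (z - c (J i1))" using up[OF i1(1) Re0 2 pR0] by blast
        have "fd (cmod (z - c (J i1))) \<le> fd (cmod (p - c i1))" using p1 z(5) by (rule fd_decr)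
        hence "Lm * fd (cmod (z - c (J i1))) \<le> Lm * fd (cmod (p - c i1))" using l0 by (rule mult_left_mono)
        hence "\<Phi> (J i1) z \<ge> Mx" using MxP z(2) by (simp add: \<Phi>_def)
        thus ?thesis using tr[OF z(1) z(3) z(4)] that by blast
      next
        case 3
        obtain z where z: "P i1 < n" "u (P i1) z = u i1 p" "\<bar>Im z\<bar> < 2 * Re z" "cmod z \<ge> cmod p - K"
          "cmod (p - c i1) \<le> cmod (z - c (P i1))" using low[OF i1(1) Re0 3 pR0] by blast
        have "fd (cmod (z - c (P i1))) \<le> fd (cmod (p - c i1))" using p1 z(5) by (rule fd_decr)
        hence "Lm * fd (cmod (z - c (P i1))) \<le> Lm * fd (cmod (p - c i1))" using l0 by (rule mult_left_mono)
        hence "\<Phi> (P i1) z \<ge> Mx" using MxP z(2) by (simp add: \<Phi>_def)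
        thus ?thesis using tr[OF z(1) z(3) z(4)] that by blast
      qed
    qed
    have PhiEq: "\<Phi> j \<zeta> = Mx" using allle[OF jz(1) jz(2)] jz(6) by simp
    define Ob where "Ob = ({w. \<bar>Im w\<bar> < 2 * Re w} \<inter> {w. R < cmod w}) \<inter> ball 0 R'"
    have Oo: "open Ob" unfolding Ob_def
      by (intro open_Int open_ball open_Collect_less continuous_intros)
    have zO: "\<zeta> \<in> Ob" using jz by (simp add: Ob_def)
    obtain \<delta> where dp: "\<delta> > 0" and bO: "ball \<zeta> \<delta> \<subseteq> Ob" using openE[OF Oo zO] by blast
    have OK: "Ob \<subseteq> Ks" by (auto simp: Ob_def Ks_def sect_def)
    have bS: "ball \<zeta> \<delta> \<subseteq> S j" using bO OK KsH hS[OF jz(1)] by blast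
    have nc: "y \<noteq> c j" if "y \<in> ball \<zeta> \<delta>" for y
    proof -
      have "cmod y > R" using bO that by (auto simp: Ob_def)
      thus ?thesis using cK[OF jz(1)] Rp by auto
    qed
    have mx: "u j y - Lm * fd (cmod (y - c j)) \<le> u j \<zeta> - Lm * fd (cmod (\<zeta> - c j))" if "y \<in> ball \<zeta> \<delta>" for y
    proof -
      have "y \<in> Ks" using bO OK that by blast
      thus ?thesis using allle[OF jz(1), of y] PhiEq by (simp add: \<Phi>_def)
    qed
    define d where "d = cmod (\<zeta> - c j)"
    have lapz: "laplacian (u j) \<zeta> \<le> Lm * (fd d * (6 - 2 * kk / d + 1 / (4 * d^2)))"
      unfolding d_def by (rule lap_compare_decay[OF sm[OF jz(1)] bS dp nc mx])
    have zH: "\<zeta> \<in> closed_half_plane" using jz(2) KsH by blast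
    define U where "U = u j \<zeta>"
    define B where "B = Lm * fd d"
    have d1: "d \<ge> 1" using dist1[OF jz(1), of \<zeta>] jz(4) Rp K0 unfolding d_def by linarith
    have d2: "d \<le> 2 * cmod \<zeta>" using dist2[OF jz(1), of \<zeta>] jz(4) Rp K0 unfolding d_def by linarith
    have U0: "U \<ge> 0" using nn[OF jz(1) zH] by (simp add: U_def)
    have B0: "B \<ge> 0" using l0 fd_nonneg[of d] d1 by (simp add: B_def)
    have BU: "B < U" using PhiEq Mxeta \<eta>0 by (simp add: \<Phi>_def U_def B_def d_def)
    have Ud: "U \<le> 1 / d"
    proof -
      have sz: "sect \<zeta>" using jz(3) by (simp add: sect_def)
      have zR0: "cmod \<zeta> \<ge> Rzero" using jz(4) Rp K0 by linarith
      have Ub: "U \<le> Cone / (cmod \<zeta>)^2" using dec[OF jz(1) sz zR0] by (simp add: U_def)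
      have zp: "cmod \<zeta> > 0" using jz(4) Rp by linarith
      have "Cone * d \<le> Cone * (2 * cmod \<zeta>)" using d2 Cone0 by (rule mult_left_mono)
      also have "\<dots> = (2 * Cone) * cmod \<zeta>" by simp
      also have "\<dots> \<le> cmod \<zeta> * cmod \<zeta>" using jz(4) Rp zp by (intro mult_right_mono) auto
      finally have "Cone * d \<le> (cmod \<zeta>)^2" by (simp add: power2_eq_square)
      hence "Cone / (cmod \<zeta>)^2 \<le> 1 / d" using zp d1 by (simp add: divide_simps mult.commute)
      thus ?thesis using Ub by linarith
    qed
    have lapU: "FF U \<le> B * (6 - 2 * kk / d + 1 / (4 * d^2))"
      using lapz lap[OF jz(1) zH] by (simp add: U_def B_def mult.assoc)
    show False by (rule final_ineq[OF d1 U0 Ud BU B0 lapU])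
  qed
  show ?thesis using l0 Rp(1) main by blast
qed

lemma fd_shift: assumes "r \<ge> 2 * K + 1" "K \<ge> 0"
  shows "fd (r - 2 * K) \<le> exp (2 * K * kk) * (sqrt r * exp (- kk * r))"
proof -
  have "sqrt (r - 2 * K) \<le> sqrt r" using assms by simp
  moreover have "exp (- kk * (r - 2 * K)) = exp (2 * K * kk) * exp (- kk * r)"
    by (simp add: algebra_simps flip: exp_add)
  ultimately show ?thesis unfolding fd_def
    by (simp add: mult_right_mono mult.left_commute)
qed

theorem corollary5p3:
  fixes n :: nat and a b :: "nat \<Rightarrow> real" and u :: "nat \<Rightarrow> complex \<Rightarrow> real"
  assumes n_pos: "n \<ge> 1"
    and a_pos: "\<forall>i<n. a i > 0"
    and smooth: "\<forall>i<n. \<exists>S. closed_half_plane \<subseteq> S \<and> smooth_on S (u i)"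
    and glue: "\<forall>i<n. \<forall>z\<in>bot_sector (a (Suc i mod n)) (b (Suc i mod n)).
                 u (Suc i mod n) z = u i (glue_map (a (Suc i mod n)) (b (Suc i mod n)) (b i) z)"
    and eqn: "\<forall>i<n. \<forall>w\<in>closed_half_plane.
                 gauss_curv (u i) w = -1 + cubic_norm_sq (u i) (\<lambda>_. 1) w"
    and nonpos: "\<forall>i<n. \<forall>w\<in>closed_half_plane. gauss_curv (u i) w \<le> 0"
  shows "\<exists>C r0. C > 0 \<and> r0 > 0 \<and>
           (\<forall>i<n. \<forall>w\<in>closed_half_plane. cmod w \<ge> r0 \<longrightarrow>
              0 \<le> u i w \<and> u i w \<le> C * sqrt (cmod w) * exp (- sqrt 6 * cmod w))"
proof -
  have "\<forall>i. \<exists>S. i < n \<longrightarrow> closed_half_plane \<subseteq> S \<and> smooth_on S (u i)" using smooth by blast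
  then obtain S where S: "\<And>i. i < n \<Longrightarrow> closed_half_plane \<subseteq> S i \<and> smooth_on (S i) (u i)"
    by (metis (mono_tags))
  have lap: "laplacian (u i) w = FF (u i w)" if "i < n" "w \<in> closed_half_plane" for i w
    using eqn that by (intro lap_from_eqn) blast
  have nn: "u i w \<ge> 0" if "i < n" "w \<in> closed_half_plane" for i w
    using eqn nonpos that by (intro nonneg_from_eqn) blast+
  define J where "J = (\<lambda>i. Suc i mod n)"
  define P where "P = (\<lambda>i. if i = 0 then n - 1 else i - 1)"
  have Jn: "J i < n" for i using n_pos by (simp add: J_def)
  have Pn: "P i < n" if "i < n" for i using that n_pos by (simp add: P_def) arith
  have JP: "J (P i) = i" if "i < n" for i
  proof (cases "i = 0")
    case True thus ?thesis using n_pos by (simp add: J_def P_def)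
  next
    case False thus ?thesis using that by (simp add: J_def P_def)
  qed
  define \<gamma> where "\<gamma> = (\<lambda>i. glue_map (a (J i)) (b (J i)) (b i) 0)"
  obtain c t where ct: "\<And>i. i < n \<Longrightarrow> t i \<ge> 0 \<and> om * c (Suc i mod n) + \<gamma> i = c i + of_real (t i) * e0"
    using centers_exist[OF n_pos, of \<gamma>] by blast
  have Gc: "glue_map (a (J i)) (b (J i)) (b i) (c (J i)) = c i + of_real (t i) * e0" if "i < n" for i
    using ct[OF that] glue_lin[of "a (J i)" "b (J i)" "b i" "c (J i)"] by (simp add: \<gamma>_def J_def)
  have t0: "t i \<ge> 0" if "i < n" for i using ct[OF that] by simp
  define Kb where "Kb = (\<Sum>i<n. \<bar>a i\<bar> + \<bar>b i\<bar> + cmod (c i) + t i)"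
  have Kb_ge: "\<bar>a i\<bar> + \<bar>b i\<bar> + cmod (c i) + t i \<le> Kb" if "i < n" for i
    unfolding Kb_def using that t0 by (intro member_le_sum) auto
  have Kb: "\<bar>a i\<bar> \<le> Kb" "\<bar>b i\<bar> \<le> Kb" "cmod (c i) \<le> Kb" "t i \<le> Kb" if "i < n" for i
    using Kb_ge[OF that] t0[OF that] abs_ge_zero[of "a i"] abs_ge_zero[of "b i"] norm_ge_zero[of "c i"]
    by linarith+
  have "\<bar>a 0\<bar> \<le> Kb" using Kb(1)[of 0] n_pos by simp
  hence Kb0: "Kb \<ge> 0" using abs_ge_zero[of "a 0"] by linarith
  define K where "K = 3 * Kb"
  have K0: "K \<ge> 0" using Kb0 by (simp add: K_def)
  define R0 where "R0 = 100 * Kb + 124"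
  have R0p: "R0 \<ge> 24" "R0 \<ge> 100 * (Kb + 1)" using Kb0 by (simp_all add: R0_def)
  have dec: "u i w \<le> 288 / (cmod w)^2" if "i < n" "sect w" "cmod w \<ge> R0" for i w
  proof -
    have c3: "cmod w \<le> 3 * Re w" by (rule cmod_sect[OF that(2)])
    have R8: "Re w \<ge> 8" using c3 that(3) R0p by linarith
    have L: "u i w \<le> 32 / (Re w)^2"
      using S[OF that(1)] lap[OF that(1)] R8 by (intro liouville_step) auto
    have wp: "cmod w > 0" using that(3) R0p by linarith
    have "(cmod w)^2 \<le> (3 * Re w)^2" using c3 wp by (intro power_mono) auto
    hence "(cmod w)^2 \<le> 9 * (Re w)^2" by (simp add: power_mult_distrib)
    hence "32 / (Re w)^2 \<le> 288 / (cmod w)^2" using wp R8 by (simp add: divide_simps)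
    thus ?thesis using L by linarith
  qed
  have upc: "J i < n \<and> (\<exists>z. u (J i) z = u i w \<and> \<bar>Im z\<bar> < 2 * Re z \<and> cmod z \<ge> cmod w - K \<and>
            (Im w = 2 * Re w \<longrightarrow> cmod (w - c i) \<le> cmod (z - c (J i))))"
    if "i < n" "Re w \<ge> 0" "Im w \<ge> 2 * Re w" "cmod w \<ge> R0" for i w
  proof -
    define j where "j = J i"
    have jn: "j < n" by (simp add: j_def Jn)
    have KK: "\<bar>a j\<bar> \<le> Kb" "\<bar>b j\<bar> \<le> Kb" "\<bar>b i\<bar> \<le> Kb" using Kb jn that(1) by auto
    have w40: "cmod w \<ge> 40 * (Kb + 1)" using that(4) R0p Kb0 by linarith
    note g = up_geom[OF KK that(2) that(3) w40]
    define z where "z = Gi (a j) (b j) (b i) w"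
    have zb: "z \<in> bot_sector (a j) (b j)" using bot_mem[OF g(1)] by (simp add: z_def)
    have "u j z = u i (glue_map (a j) (b j) (b i) z)"
      using glue that(1) zb by (simp add: j_def J_def)
    hence uz: "u j z = u i w" using g(2) by (simp add: z_def)
    have side: "cmod (w - c i) \<le> cmod (z - c j)" if "Im w = 2 * Re w"
    proof -
      have w100: "cmod w \<ge> 100 * (Kb + 1)" using \<open>cmod w \<ge> R0\<close> R0p by linarith
      show ?thesis unfolding z_def
        by (rule side_up[OF KK Kb(3)[OF \<open>i < n\<close>] _ t0[OF \<open>i < n\<close>] \<open>Re w \<ge> 0\<close> that w100])
           (use Gc[OF \<open>i < n\<close>] in \<open>simp add: j_def\<close>)
    qed
    have "cmod z \<ge> cmod w - K" using g(4) Kb0 by (simp add: z_def K_def)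
    thus ?thesis using jn uz g(3) side by (auto simp: z_def j_def)
  qed
  have lowc: "P i < n \<and> (\<exists>z. u (P i) z = u i w \<and> \<bar>Im z\<bar> < 2 * Re z \<and> cmod z \<ge> cmod w - K \<and>
            (Im w = - 2 * Re w \<longrightarrow> cmod (w - c i) \<le> cmod (z - c (P i))))"
    if "i < n" "Re w \<ge> 0" "Im w \<le> - 2 * Re w" "cmod w \<ge> R0" for i w
  proof -
    define p where "p = P i"
    have pn: "p < n" using Pn[OF that(1)] by (simp add: p_def)
    have Jp: "J p = i" using JP[OF that(1)] by (simp add: p_def)
    have KK: "\<bar>a i\<bar> \<le> Kb" "\<bar>b i\<bar> \<le> Kb" "\<bar>b p\<bar> \<le> Kb" using Kb pn that(1) by auto
    have w40: "cmod w \<ge> 40 * (Kb + 1)" using that(4) R0p Kb0 by linarith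
    note g = low_geom[OF KK that(2) that(3) w40]
    define z where "z = glue_map (a i) (b i) (b p) w"
    have wb: "w \<in> bot_sector (a i) (b i)" using bot_mem[OF g(1)] .
    have wb': "w \<in> bot_sector (a (Suc p mod n)) (b (Suc p mod n))" using wb Jp by (simp add: J_def)
    have "u (Suc p mod n) w = u p (glue_map (a (Suc p mod n)) (b (Suc p mod n)) (b p) w)"
      using glue pn wb' by blast
    hence "u (J p) w = u p (glue_map (a (J p)) (b (J p)) (b p) w)" by (simp add: J_def)
    hence uz: "u p z = u i w" using Jp by (simp add: z_def)
    have side: "cmod (w - c i) \<le> cmod (z - c p)" if "Im w = - 2 * Re w"
    proof -
      have w100: "cmod w \<ge> 100 * (Kb + 1)" using \<open>cmod w \<ge> R0\<close> R0p by linarith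
      have Gc': "glue_map (a i) (b i) (b p) (c i) = c p + of_real (t p) * e0" using Gc[OF pn] Jp by simp
      show ?thesis unfolding z_def
        by (rule side_low[OF KK Kb(3)[OF pn] Gc' t0[OF pn] Kb(4)[OF pn] \<open>Re w \<ge> 0\<close> that w100])
    qed
    have "cmod z \<ge> cmod w - K" using g(3) Kb0 by (simp add: z_def K_def)
    thus ?thesis using pn uz g(2) side by (auto simp: z_def p_def)
  qed
  obtain Lm R where LR: "Lm \<ge> 0" "R > 0"
    "\<And>i w. i < n \<Longrightarrow> sect w \<Longrightarrow> cmod w \<ge> R \<Longrightarrow> u i w \<le> Lm * fd (cmod (w - c i))"
  proof -
    have "\<exists>Lm R. Lm \<ge> 0 \<and> R > 0 \<and> (\<forall>i<n. \<forall>w. sect w \<longrightarrow> cmod w \<ge> R \<longrightarrow> u i w \<le> Lm * fd (cmod (w - c i)))"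
    proof (rule max_argument[OF n_pos, where S = S and J = J and P = P and K = K and Rzero = R0 and Cone = 288])
      show "smooth_on (S i) (u i)" if "i < n" for i using S[OF that] by simp
      show "closed_half_plane \<subseteq> S i" if "i < n" for i using S[OF that] by simp
      show "laplacian (u i) w = FF (u i w)" if "i < n" "w \<in> closed_half_plane" for i w using lap[OF that] .
      show "u i w \<ge> 0" if "i < n" "w \<in> closed_half_plane" for i w using nn[OF that] .
      show "u i w \<le> 288 / (cmod w)^2" if "i < n" "sect w" "cmod w \<ge> R0" for i w using dec[OF that] .
      show "cmod (c i) \<le> K" if "i < n" for i using Kb(3)[OF that] Kb0 by (simp add: K_def)
      show "K \<ge> 0" by (rule K0)
      show "R0 \<ge> 0" using R0p by simp
      show "(288::real) \<ge> 0" by simp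
      show "J i < n \<and> (\<exists>z. u (J i) z = u i w \<and> \<bar>Im z\<bar> < 2 * Re z \<and> cmod z \<ge> cmod w - K \<and>
            cmod (w - c i) \<le> cmod (z - c (J i)))"
        if "i < n" "Re w \<ge> 0" "Im w = 2 * Re w" "cmod w \<ge> R0" for i w
        using upc[OF that(1) that(2) _ that(4)] that(3) by auto
      show "P i < n \<and> (\<exists>z. u (P i) z = u i w \<and> \<bar>Im z\<bar> < 2 * Re z \<and> cmod z \<ge> cmod w - K \<and>
            cmod (w - c i) \<le> cmod (z - c (P i)))"
        if "i < n" "Re w \<ge> 0" "Im w = - 2 * Re w" "cmod w \<ge> R0" for i w
        using lowc[OF that(1) that(2) _ that(4)] that(3) by auto
    qed
    thus ?thesis using that by blast
  qed
  define r0 where "r0 = R + R0 + 2 * K + 2"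
  define C where "C = Lm * exp (2 * K * kk) + 1"
  have Cp: "C > 0" using LR(1) by (simp add: C_def add_nonneg_pos)
  have r0p: "r0 > 0" using LR(2) R0p K0 by (simp add: r0_def)
  have bound: "u i w \<le> C * sqrt (cmod w) * exp (- sqrt 6 * cmod w)"
    if i: "i < n" and wH: "w \<in> closed_half_plane" and wr: "cmod w \<ge> r0" for i w
  proof -
    have Re0: "Re w \<ge> 0" using wH by (simp add: closed_half_plane_def)
    have wR0: "cmod w \<ge> R0" using wr LR(2) K0 by (simp add: r0_def)
    have "\<exists>j z. j < n \<and> u i w = u j z \<and> sect z \<and> cmod z \<ge> cmod w - K"
    proof (cases "sect w")
      case True thus ?thesis using i K0 by (intro exI[of _ i] exI[of _ w]) simp
    next
      case False
      hence "Im w > 2 * Re w \<or> Im w < - 2 * Re w" by (auto simp: sect_def abs_if split: if_splits)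
      thus ?thesis
      proof
        assume "Im w > 2 * Re w"
        from upc[OF i Re0 _ wR0] this obtain z where
          "u (J i) z = u i w" "\<bar>Im z\<bar> < 2 * Re z" "cmod z \<ge> cmod w - K" by force
        thus ?thesis using Jn[of i] by (intro exI[of _ "J i"] exI[of _ z]) (simp add: sect_def)
      next
        assume "Im w < - 2 * Re w"
        from lowc[OF i Re0 _ wR0] this obtain z where
          "u (P i) z = u i w" "\<bar>Im z\<bar> < 2 * Re z" "cmod z \<ge> cmod w - K" by force
        thus ?thesis using Pn[OF i] by (intro exI[of _ "P i"] exI[of _ z]) (simp add: sect_def)
      qed
    qed
    then obtain j z where jz: "j < n" "u i w = u j z" "sect z" "cmod z \<ge> cmod w - K" by blast
    have zR: "cmod z \<ge> R" using jz(4) wr R0p K0 by (simp add: r0_def)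
    have ub: "u i w \<le> Lm * fd (cmod (z - c j))" using LR(3)[OF jz(1) jz(3) zR] jz(2) by simp
    have d1: "cmod (z - c j) \<ge> cmod w - 2 * K"
    proof -
      have "cmod (z - c j) \<ge> cmod z - cmod (c j)" by (rule norm_triangle_ineq2)
      moreover have "cmod (c j) \<le> K" using Kb(3)[OF jz(1)] Kb0 by (simp add: K_def)
      ultimately show ?thesis using jz(4) by linarith
    qed
    have w1: "1 \<le> cmod w - 2 * K" using wr R0p LR(2) by (simp add: r0_def)
    have "fd (cmod (z - c j)) \<le> fd (cmod w - 2 * K)" using w1 d1 by (rule fd_decr)
    also have "\<dots> \<le> exp (2 * K * kk) * (sqrt (cmod w) * exp (- kk * cmod w))"
      using wr R0p LR(2) K0 by (intro fd_shift) (auto simp: r0_def)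
    finally have f: "fd (cmod (z - c j)) \<le> exp (2 * K * kk) * (sqrt (cmod w) * exp (- kk * cmod w))" .
    have X0: "sqrt (cmod w) * exp (- kk * cmod w) \<ge> 0" by simp
    have "u i w \<le> Lm * (exp (2 * K * kk) * (sqrt (cmod w) * exp (- kk * cmod w)))"
      using ub f LR(1) by (meson mult_left_mono order_trans)
    also have "\<dots> = (Lm * exp (2 * K * kk)) * (sqrt (cmod w) * exp (- kk * cmod w))" by simp
    also have "\<dots> \<le> C * (sqrt (cmod w) * exp (- kk * cmod w))"
      using X0 by (intro mult_right_mono) (auto simp: C_def)
    finally show ?thesis by (simp add: kk_def mult.assoc)
  qed
  show ?thesis using Cp r0p bound nn by blast
qed

end
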